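(* Let $\bm v_1,\dots,\bm v_N\in\mathbb{R}^r$, $\bm X := \mathsf{Gram}(\bm v_1,\dots,\bm v_N)$, and $\bm v := (\bm v_1;\dots;\bm v_N)\in\mathbb{R}^{rN}$. (a) If $\sum_{i=1}^N\|\bm v_i\|_2^2 = N$ and there exists $\bm M\in\mathcal{B}(N,r)$ with $\mathrm{rank}(\bm M) = r$ and $\bm v^\top\bm M\bm v = N^2$, then $\bm X\in\mathscr{C}^N$. (b) If $N\notin\{1,2\}$ and $N$ is not divisible by $4$, then $\bm I_N\in\mathscr{C}^N$ and $\bm I_N = \mathsf{Gram}(\bm e_1,\dots,\bm e_N)$ (standard basis of $\mathbb{R}^N$), but with $\bm v := (\bm e_1;\dots;\bm e_N)\in\mathbb{R}^{N^2}$ there is no $\bm M\in\mathcal{B}(N,N)$ with $\bm v^\top\bm M\bm v = N^2$ and $\mathrm{rank}(\bm M) = N$.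
   Context: $\mathscr{C}^N := \mathrm{conv}\{\bm x\bm x^\top : \bm x\in\{\pm1\}^N\}$ (the cut polytope). $\mathsf{Gram}$ denotes the Gram matrix, $(\bm v_1;\dots;\bm v_N)$ the concatenation. A matrix $\bm M \in \mathbb{R}^{rN\times rN}$ is viewed as an $N\times N$ array of $r\times r$ blocks, $\bm M_{[ij]}$ denoting block $(i,j)$. $\mathcal{B}(N,r)$ is the set of symmetric $\bm M \in \mathbb{R}^{rN\times rN}$ with $\bm M \succeq 0$, $\bm M_{[ii]} = \bm I_r$ for all $i$, and $\bm M_{[ij]} = \bm M_{[ij]}^\top$ for all $i,j$. *)

theory Defs
  imports "Jordan_Normal_Form.DL_Rank"
begin

text \<open>Vectors/matrices are Jordan_Normal_Form vec/mat; indices are 0-based.\<close>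

definition gram_mat :: "nat \<Rightarrow> (nat \<Rightarrow> real vec) \<Rightarrow> real mat" where
  "gram_mat N v = mat N N (\<lambda>(i,j). v i \<bullet> v j)"

definition concat_vecs :: "nat \<Rightarrow> nat \<Rightarrow> (nat \<Rightarrow> real vec) \<Rightarrow> real vec" where
  "concat_vecs r N v = vec (r * N) (\<lambda>k. v (k div r) $ (k mod r))"

definition sign_vecs :: "nat \<Rightarrow> real vec set" where
  "sign_vecs N = {x. x \<in> carrier_vec N \<and> (\<forall>i<N. x $ i = 1 \<or> x $ i = -1)}"

text \<open>Cut polytope: convex hull of the (finitely many) matrices x x^T, x in {+-1}^N,
  written as the set of convex combinations of all of these points.\<close>
definition cut_polytope :: "nat \<Rightarrow> real mat set" where
  "cut_polytope N = {X. X \<in> carrier_mat N N \<and>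
     (\<exists>w :: real vec \<Rightarrow> real. (\<forall>x \<in> sign_vecs N. 0 \<le> w x) \<and>
        (\<Sum>x \<in> sign_vecs N. w x) = 1 \<and>
        (\<forall>i<N. \<forall>j<N. X $$ (i,j) = (\<Sum>x \<in> sign_vecs N. w x * (x $ i * x $ j))))}"

definition psd_mat :: "real mat \<Rightarrow> bool" where
  "psd_mat M \<longleftrightarrow> M \<in> carrier_mat (dim_row M) (dim_row M) \<and>
     (\<forall>x \<in> carrier_vec (dim_row M). 0 \<le> x \<bullet> (M *\<^sub>v x))"

definition block_mat :: "nat \<Rightarrow> real mat \<Rightarrow> nat \<Rightarrow> nat \<Rightarrow> real mat" where
  "block_mat r M i j = mat r r (\<lambda>(a,b). M $$ (i * r + a, j * r + b))"

definition B_set :: "nat \<Rightarrow> nat \<Rightarrow> real mat set" where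
  "B_set N r = {M. M \<in> carrier_mat (r * N) (r * N) \<and> transpose_mat M = M \<and> psd_mat M \<and>
     (\<forall>i<N. block_mat r M i i = 1\<^sub>m r) \<and>
     (\<forall>i<N. \<forall>j<N. transpose_mat (block_mat r M i j) = block_mat r M i j)}"

definition mat_rank :: "real mat \<Rightarrow> nat" where
  "mat_rank M = vec_space.rank (dim_row M) (M :: real mat)"

end

theory Submission
  imports Defs "Jordan_Normal_Form.DL_Rank_Submatrix"
begin
lemma pick_init:
  fixes r p :: nat
  assumes "r \<le> p"
  shows "x < r \<Longrightarrow> pick ({..<r} \<union> {p}) x = x"
proof (induction x)
  case 0
  then show ?case by (auto intro!: Least_equality)
next
  case (Suc x)
  then show ?case using assms by (auto intro!: Least_equality)
qed

lemma pick_last: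
  fixes r p :: nat
  assumes "r \<le> p"
  shows "pick ({..<r} \<union> {p}) r = p"
proof (cases r)
  case 0
  then show ?thesis by (auto intro!: Least_equality)
next
  case (Suc x)
  have "pick ({..<r} \<union> {p}) x = x" using pick_init[OF assms] Suc by auto
  then show ?thesis using Suc assms by (auto intro!: Least_equality)
qed

lemma card_init: fixes r p n :: nat assumes "r \<le> p" "p < n"
  shows "card {i. i < n \<and> i \<in> {..<r} \<union> {p}} = Suc r"
proof -
  have "{i. i < n \<and> i \<in> {..<r} \<union> {p}} = insert p {..<r}" using assms by auto
  then show ?thesis using assms by auto
qed

lemma minor_factor:
  fixes M :: "real mat"
  assumes M: "M \<in> carrier_mat n n"
    and idb: "\<And>a b. a < r \<Longrightarrow> b < r \<Longrightarrow> M $$ (a,b) = (if a = b then 1 else 0)"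
    and rk: "vec_space.rank n M \<le> r"
    and p: "p < n" and q: "q < n"
  shows "M $$ (p,q) = (\<Sum>k<r. M $$ (p,k) * M $$ (k,q))"
proof (cases "p < r \<or> q < r")
  case True
  then show ?thesis
  proof
    assume pr: "p < r"
    have "(\<Sum>k<r. M $$ (p,k) * M $$ (k,q)) = (\<Sum>k<r. (if p = k then M $$ (k,q) else 0))"
    proof (rule sum.cong)
      fix k assume "k \<in> {..<r}"
      then show "M $$ (p,k) * M $$ (k,q) = (if p = k then M $$ (k,q) else 0)"
        using idb[OF pr, of k] by simp
    qed simp
    also have "\<dots> = M $$ (p,q)" using pr by (simp add: sum.delta)
    finally show ?thesis by simp
  next
    assume qr: "q < r"
    have "(\<Sum>k<r. M $$ (p,k) * M $$ (k,q)) = (\<Sum>k<r. (if q = k then M $$ (p,k) else 0))"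
    proof (rule sum.cong)
      fix k assume "k \<in> {..<r}"
      then have "M $$ (k,q) = (if k = q then 1 else 0)" using idb[of k q] qr by simp
      then show "M $$ (p,k) * M $$ (k,q) = (if q = k then M $$ (p,k) else 0)"
        by auto
    qed simp
    also have "\<dots> = M $$ (p,q)" using qr by (simp add: sum.delta)
    finally show ?thesis by simp
  qed
next
  case False
  then have pr: "r \<le> p" and qr: "r \<le> q" by auto
  define I where "I = {..<r} \<union> {p}"
  define J where "J = {..<r} \<union> {q}"
  define B where "B = submatrix M I J"
  define f where "f = (\<lambda>x. if x < r then x else p)"
  define g where "g = (\<lambda>x. if x < r then x else q)"
  define d where "d = M $$ (p,q) - (\<Sum>k<r. M $$ (p,k) * M $$ (k,q))"
  have dM: "dim_row M = n" "dim_col M = n" using M by auto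
  have cI: "card {i. i < dim_row M \<and> i \<in> I} = Suc r" unfolding I_def dM using card_init[OF pr p] .
  have cJ: "card {i. i < dim_col M \<and> i \<in> J} = Suc r" unfolding J_def dM using card_init[OF qr q] .
  have pI: "x \<le> r \<Longrightarrow> pick I x = f x" for x
  proof (cases "x < r")
    case True then show ?thesis unfolding I_def f_def using pick_init[OF pr True] by simp
  next
    case False then have "x = r" if "x \<le> r" using that by simp
    then show "x \<le> r \<Longrightarrow> pick I x = f x" unfolding I_def f_def using pick_last[OF pr] False by simp
  qed
  have pJ: "x \<le> r \<Longrightarrow> pick J x = g x" for x
  proof (cases "x < r")
    case True then show ?thesis unfolding J_def g_def using pick_init[OF qr True] by simp
  next
    case False then have "x = r" if "x \<le> r" using that by simp
    then show "x \<le> r \<Longrightarrow> pick J x = g x" unfolding J_def g_def using pick_last[OF qr] False by simp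
  qed
  have Br: "dim_row B = Suc r" unfolding B_def dim_submatrix using cI .
  have Bcc: "dim_col B = Suc r" unfolding B_def dim_submatrix using cJ .
  have Bc: "B \<in> carrier_mat (Suc r) (Suc r)" using carrier_matI[OF Br Bcc] .
  have Bi: "x < Suc r \<Longrightarrow> y < Suc r \<Longrightarrow> B $$ (x,y) = M $$ (f x, g y)" for x y
  proof -
    assume x: "x < Suc r" and y: "y < Suc r"
    have "B $$ (x,y) = M $$ (pick I x, pick J y)" unfolding B_def
      by (rule submatrix_index) (simp_all only: cI cJ x y)
    also have "\<dots> = M $$ (f x, g y)" using pI[of x] pJ[of y] x y by simp
    finally show ?thesis .
  qed
  define L where "L = mat (Suc r) (Suc r) (\<lambda>(x,y). if x = y then 1 else if x = r \<and> y < r then M $$ (p,y) else 0)"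
  define U where "U = mat (Suc r) (Suc r) (\<lambda>(x,y). if x < r then B $$ (x,y) else if y = r then d else 0)"
  have Lc: "L \<in> carrier_mat (Suc r) (Suc r)" and Uc: "U \<in> carrier_mat (Suc r) (Suc r)"
    unfolding L_def U_def by auto
  have BLU: "B = L * U"
  proof (rule eq_matI)
    fix x y assume x: "x < dim_row (L * U)" and y: "y < dim_col (L * U)"
    then have x': "x < Suc r" and y': "y < Suc r" using Lc Uc by auto
    have "(L * U) $$ (x,y) = (\<Sum>z<Suc r. L $$ (x,z) * U $$ (z,y))"
      using x' y' Lc Uc by (simp add: index_mult_mat scalar_prod_def col_def row_def lessThan_atLeast0)
    also have "\<dots> = B $$ (x,y)"
    proof (cases "x < r")
      case True
      have "(\<Sum>z<Suc r. L $$ (x,z) * U $$ (z,y)) = (\<Sum>z<Suc r. if x = z then U $$ (z,y) else 0)"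
        by (intro sum.cong) (use True in \<open>auto simp: L_def\<close>)
      also have "\<dots> = U $$ (x,y)" using True by simp
      finally show ?thesis using True y' by (simp add: U_def)
    next
      case False
      then have xr: "x = r" using x' by auto
      have "(\<Sum>z<Suc r. L $$ (x,z) * U $$ (z,y)) = (\<Sum>z<r. M $$ (p,z) * U $$ (z,y)) + U $$ (r,y)"
        using xr by (simp add: L_def)
      also have "\<dots> = B $$ (x,y)"
      proof (cases "y < r")
        case True
        have "(\<Sum>z<r. M $$ (p,z) * U $$ (z,y)) = (\<Sum>z<r. if y = z then M $$ (p,z) else 0)"
        proof (rule sum.cong)
          fix z assume z: "z \<in> {..<r}"
          have "U $$ (z,y) = (if z = y then 1 else 0)"
            using z True by (simp add: U_def Bi f_def g_def idb)
          then show "M $$ (p,z) * U $$ (z,y) = (if y = z then M $$ (p,z) else 0)" by auto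
        qed simp
        then show ?thesis using True xr by (simp add: U_def Bi f_def g_def)
      next
        case False
        then have yr: "y = r" using y' by auto
        have "(\<Sum>z<r. M $$ (p,z) * U $$ (z,y)) = (\<Sum>z<r. M $$ (p,z) * M $$ (z,q))"
          by (intro sum.cong) (use yr in \<open>auto simp: U_def Bi f_def g_def\<close>)
        then show ?thesis using xr yr by (simp add: U_def Bi f_def g_def d_def)
      qed
      finally show ?thesis .
    qed
    finally show "B $$ (x,y) = (L * U) $$ (x,y)" by simp
  qed (use Bc Lc Uc in auto)
  have dL: "det L = 1"
  proof -
    have "det L = prod_list (diag_mat L)"
      by (rule det_lower_triangular[OF _ Lc]) (auto simp: L_def)
    also have "diag_mat L = replicate (Suc r) 1"
      by (rule nth_equalityI) (use Lc in \<open>auto simp: diag_mat_def L_def nth_append nth_Cons'\<close>)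
    finally show ?thesis by simp
  qed
  have dU: "det U = d"
  proof -
    have "det U = prod_list (diag_mat U)"
      by (rule det_upper_triangular[OF _ Uc]) (auto simp: U_def Bi f_def g_def idb)
    also have "diag_mat U = replicate r 1 @ [d]"
      by (rule nth_equalityI) (use Uc in \<open>auto simp: diag_mat_def U_def nth_append Bi f_def g_def idb\<close>)
    finally show ?thesis by simp
  qed
  have "det B = d" using BLU det_mult[OF Lc Uc] dL dU by simp
  show ?thesis
  proof (rule ccontr)
    assume "\<not> ?thesis"
    then have "d \<noteq> 0" unfolding d_def by simp
    then have "det (submatrix M I J) \<noteq> 0" using \<open>det B = d\<close> B_def by simp
    from vec_space.rank_gt_minor[OF M this]
    have "card {j. j < n \<and> j \<in> J} \<le> vec_space.rank n M" .
    moreover have "card {j. j < n \<and> j \<in> J} = Suc r" using card_init[OF qr q] J_def by simp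
    ultimately show False using rk by simp
  qed
qed
definition ip :: "nat \<Rightarrow> (nat \<Rightarrow> real) \<Rightarrow> (nat \<Rightarrow> real) \<Rightarrow> real" where
  "ip r x y = (\<Sum>k<r. x k * y k)"

definition Top :: "nat \<Rightarrow> (nat \<Rightarrow> nat \<Rightarrow> real) \<Rightarrow> (nat \<Rightarrow> real) \<Rightarrow> (nat \<Rightarrow> real)" where
  "Top r S x = (\<lambda>a. \<Sum>b<r. S a b * x b)"

definition symm :: "nat \<Rightarrow> (nat \<Rightarrow> nat \<Rightarrow> real) \<Rightarrow> bool" where
  "symm r S \<longleftrightarrow> (\<forall>a<r. \<forall>b<r. S a b = S b a)"
definition invol :: "nat \<Rightarrow> (nat \<Rightarrow> nat \<Rightarrow> real) \<Rightarrow> bool" where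
  "invol r S \<longleftrightarrow> (\<forall>a<r. \<forall>b<r. (\<Sum>k<r. S a k * S k b) = (if a = b then 1 else 0))"
definition commut :: "nat \<Rightarrow> (nat \<Rightarrow> nat \<Rightarrow> real) \<Rightarrow> (nat \<Rightarrow> nat \<Rightarrow> real) \<Rightarrow> bool" where
  "commut r S T \<longleftrightarrow> (\<forall>a<r. \<forall>b<r. (\<Sum>k<r. S a k * T k b) = (\<Sum>k<r. T a k * S k b))"

lemma ip_sym: "ip r x y = ip r y x"
  unfolding ip_def by (simp add: mult.commute)

lemma ip_cong: "(\<And>a. a < r \<Longrightarrow> x a = x' a) \<Longrightarrow> (\<And>a. a < r \<Longrightarrow> y a = y' a) \<Longrightarrow> ip r x y = ip r x' y'"
  unfolding ip_def by (intro sum.cong) auto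

lemma ip_lin: "ip r (\<lambda>a. c * x a + d * y a) z = c * ip r x z + d * ip r y z"
  unfolding ip_def by (simp add: algebra_simps sum.distrib sum_distrib_left)

lemma ip_nonneg: "0 \<le> ip r x x"
  unfolding ip_def by (intro sum_nonneg) simp

lemma Top_lin: "Top r S (\<lambda>a. c * x a + d * y a) = (\<lambda>a. c * Top r S x a + d * Top r S y a)"
  unfolding Top_def by (simp add: algebra_simps sum.distrib sum_distrib_left)

lemma Top_resp: "(\<And>a. a < r \<Longrightarrow> x a = y a) \<Longrightarrow> Top r S x = Top r S y"
  unfolding Top_def by (intro ext sum.cong) auto

lemma ip_Top: assumes "symm r S" shows "ip r (Top r S x) y = ip r x (Top r S y)"
proof -
  have "ip r (Top r S x) y = (\<Sum>k<r. \<Sum>b<r. S k b * x b * y k)"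
    unfolding ip_def Top_def by (simp add: sum_distrib_right)
  also have "\<dots> = (\<Sum>b<r. \<Sum>k<r. S k b * x b * y k)" by (rule sum.swap)
  also have "\<dots> = (\<Sum>b<r. \<Sum>k<r. x b * (S b k * y k))"
    using assms unfolding symm_def by (intro sum.cong refl) (auto simp: algebra_simps)
  also have "\<dots> = ip r x (Top r S y)"
    unfolding ip_def Top_def by (simp add: sum_distrib_left)
  finally show ?thesis .
qed

lemma Top_Top_inv: assumes "invol r S" and "a < r" shows "Top r S (Top r S x) a = x a"
proof -
  have "Top r S (Top r S x) a = (\<Sum>b<r. \<Sum>c<r. S a b * S b c * x c)"
    unfolding Top_def by (simp add: sum_distrib_left algebra_simps)
  also have "\<dots> = (\<Sum>c<r. \<Sum>b<r. S a b * S b c * x c)" by (rule sum.swap)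
  also have "\<dots> = (\<Sum>c<r. (\<Sum>b<r. S a b * S b c) * x c)"
    by (simp add: sum_distrib_right)
  also have "\<dots> = (\<Sum>c<r. (if a = c then x c else 0))"
    using assms unfolding invol_def by (intro sum.cong refl) auto
  also have "\<dots> = x a" using assms by simp
  finally show ?thesis .
qed

lemma Top_Top_expand: "Top r S (Top r T x) a = (\<Sum>c<r. (\<Sum>b<r. S a b * T b c) * x c)"
proof -
  have "Top r S (Top r T x) a = (\<Sum>b<r. \<Sum>c<r. S a b * T b c * x c)"
    unfolding Top_def by (simp add: sum_distrib_left algebra_simps)
  also have "\<dots> = (\<Sum>c<r. \<Sum>b<r. S a b * T b c * x c)" by (rule sum.swap)
  also have "\<dots> = (\<Sum>c<r. (\<Sum>b<r. S a b * T b c) * x c)"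
    by (simp add: sum_distrib_right)
  finally show ?thesis .
qed

lemma Top_comm: assumes "commut r S T" and "a < r" shows "Top r S (Top r T x) a = Top r T (Top r S x) a"
  unfolding Top_Top_expand
  using assms unfolding commut_def by (intro sum.cong refl) auto

lemma ip_lin2: "ip r z (\<lambda>a. c * x a + d * y a) = c * ip r z x + d * ip r z y"
  using ip_lin[of r c x d y z] by (simp add: ip_sym)

lemma split_ident:
  fixes R :: "(nat \<Rightarrow> real) \<Rightarrow> (nat \<Rightarrow> real)" and u :: "nat \<Rightarrow> real"
  assumes RL: "\<And>x y c d. R (\<lambda>a. c * x a + d * y a) = (\<lambda>a. c * R x a + d * R y a)"
    and Rsa: "\<And>x y. ip r (R x) y = ip r x (R y)"
    and Rresp: "\<And>x y a. (\<And>a. a < r \<Longrightarrow> x a = y a) \<Longrightarrow> a < r \<Longrightarrow> R x a = R y a"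
    and RE: "\<And>x a. a < r \<Longrightarrow> R (Top r S x) a = Top r S (R x) a"
    and Ss: "symm r S" and Si: "invol r S"
  defines "u1 \<equiv> (\<lambda>a. (1/2) * u a + (1/2) * Top r S u a)"
    and "u2 \<equiv> (\<lambda>a. (1/2) * u a + (-1/2) * Top r S u a)"
  shows "ip r u1 (R u1) + ip r u2 (R u2) = ip r u (R u)"
    and "ip r u1 (R u1) - ip r u2 (R u2) = ip r u (R (Top r S u))"
proof -
  let ?E = "Top r S"
  define X where "X = ip r u (R u)"
  define Y where "Y = ip r u (R (?E u))"
  define Z where "Z = ip r (?E u) (R u)"
  define W where "W = ip r (?E u) (R (?E u))"
  have W: "W = X"
  proof -
    have "W = ip r u (?E (R (?E u)))" unfolding W_def by (rule ip_Top[OF Ss])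
    also have "\<dots> = ip r u (R (?E (?E u)))"
      by (rule ip_cong) (auto simp: RE)
    also have "\<dots> = ip r u (R u)"
      by (rule ip_cong) (auto intro!: Rresp simp: Top_Top_inv[OF Si])
    finally show ?thesis unfolding X_def .
  qed
  have Z: "Z = Y"
  proof -
    have "Z = ip r u (?E (R u))" unfolding Z_def by (rule ip_Top[OF Ss])
    also have "\<dots> = ip r u (R (?E u))"
      by (rule ip_cong) (auto simp: RE)
    finally show ?thesis unfolding Y_def .
  qed
  have e1: "ip r u1 (R u1) = (X + Y + Z + W) / 4"
    unfolding u1_def RL ip_lin ip_lin2 X_def Y_def Z_def W_def by (simp add: field_simps)
  have e2: "ip r u2 (R u2) = (X - Y - Z + W) / 4"
    unfolding u2_def RL ip_lin ip_lin2 X_def Y_def Z_def W_def by (simp add: field_simps)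
  show "ip r u1 (R u1) + ip r u2 (R u2) = ip r u (R u)"
    using e1 e2 W Z unfolding X_def by simp
  show "ip r u1 (R u1) - ip r u2 (R u2) = ip r u (R (Top r S u))"
    using e1 e2 W Z unfolding Y_def by simp
qed

definition extv :: "nat \<Rightarrow> real vec \<Rightarrow> real \<Rightarrow> real vec" where
  "extv n x c = vec (Suc n) (\<lambda>i. if i < n then x $ i else c)"

lemma extv_index: "i < Suc n \<Longrightarrow> extv n x c $ i = (if i < n then x $ i else c)"
  unfolding extv_def by simp

lemma sign_vecs_0: "sign_vecs 0 = {vec 0 (\<lambda>_. 0)}"
  unfolding sign_vecs_def by (auto intro!: eq_vecI)

lemma sign_vecs_Suc: "sign_vecs (Suc n) = (\<lambda>(x,c). extv n x c) ` (sign_vecs n \<times> {1,-1})"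
proof
  show "sign_vecs (Suc n) \<subseteq> (\<lambda>(x,c). extv n x c) ` (sign_vecs n \<times> {1,-1})"
  proof
    fix y assume y: "y \<in> sign_vecs (Suc n)"
    define x where "x = vec n (\<lambda>i. y $ i)"
    have yc: "y \<in> carrier_vec (Suc n)" and ys: "\<forall>i<Suc n. y $ i = 1 \<or> y $ i = -1"
      using y unfolding sign_vecs_def by auto
    have "x \<in> sign_vecs n" using ys unfolding sign_vecs_def x_def by auto
    moreover have "y $ n \<in> {1,-1}" using ys by auto
    moreover have "y = extv n x (y $ n)"
      using yc by (intro eq_vecI) (auto simp: extv_def x_def less_Suc_eq)
    ultimately show "y \<in> (\<lambda>(x,c). extv n x c) ` (sign_vecs n \<times> {1,-1})" by force
  qed
next
  show "(\<lambda>(x,c). extv n x c) ` (sign_vecs n \<times> {1,-1}) \<subseteq> sign_vecs (Suc n)"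
    unfolding sign_vecs_def extv_def by (auto simp: less_Suc_eq)
qed

lemma extv_inj: "inj_on (\<lambda>(x,c). extv n x c) (sign_vecs n \<times> {1,-1})"
proof (rule inj_onI, clarify)
  fix x c x' c' assume x: "x \<in> sign_vecs n" and x': "x' \<in> sign_vecs n"
    and e: "extv n x c = extv n x' c'"
  have "x = x'"
  proof (rule eq_vecI)
    show "dim_vec x = dim_vec x'" using x x' unfolding sign_vecs_def by auto
    fix i assume "i < dim_vec x'"
    then have i: "i < n" using x' unfolding sign_vecs_def by auto
    have "extv n x c $ i = extv n x' c' $ i" using e by simp
    then show "x $ i = x' $ i" using i by (simp add: extv_index)
  qed
  moreover have "c = c'" using arg_cong[OF e, of "\<lambda>v. v $ n"] by (simp add: extv_index)
  ultimately show "x = x' \<and> c = c'" by simp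
qed

lemma finite_sign_vecs: "finite (sign_vecs n)"
  by (induction n) (auto simp: sign_vecs_0 sign_vecs_Suc)

lemma sum_sign_vecs_Suc:
  "(\<Sum>y\<in>sign_vecs (Suc n). g y) = (\<Sum>x\<in>sign_vecs n. g (extv n x 1) + g (extv n x (-1)))"
proof -
  have "(\<Sum>y\<in>sign_vecs (Suc n). g y) = (\<Sum>p\<in>sign_vecs n \<times> {1,-1}. g ((\<lambda>(x,c). extv n x c) p))"
    unfolding sign_vecs_Suc by (rule sum.reindex[OF extv_inj, unfolded comp_def])
  also have "\<dots> = (\<Sum>x\<in>sign_vecs n. \<Sum>c\<in>{1,-1}. g (extv n x c))"
    unfolding sum.cartesian_product by (simp add: split_def)
  also have "\<dots> = (\<Sum>x\<in>sign_vecs n. g (extv n x 1) + g (extv n x (-1)))"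
    by simp
  finally show ?thesis .
qed

lemma restr_extv: "x \<in> sign_vecs n \<Longrightarrow> vec n (\<lambda>i. extv n x c $ i) = x"
  unfolding sign_vecs_def by (intro eq_vecI) (auto simp: extv_index)

lemma split_id:
  assumes Ss: "symm r S" and Si: "invol r S"
  shows "ip r (\<lambda>a. (1/2) * u a + (1/2) * Top r S u a) (\<lambda>a. (1/2) * u a + (1/2) * Top r S u a)
       + ip r (\<lambda>a. (1/2) * u a + (-1/2) * Top r S u a) (\<lambda>a. (1/2) * u a + (-1/2) * Top r S u a) = ip r u u"
    and "ip r (\<lambda>a. (1/2) * u a + (1/2) * Top r S u a) (\<lambda>a. (1/2) * u a + (1/2) * Top r S u a)
       - ip r (\<lambda>a. (1/2) * u a + (-1/2) * Top r S u a) (\<lambda>a. (1/2) * u a + (-1/2) * Top r S u a) = ip r u (Top r S u)"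
proof -
  note * = split_ident[of "\<lambda>x. x" r S u, OF refl refl _ refl Ss Si]
  show "ip r (\<lambda>a. (1/2) * u a + (1/2) * Top r S u a) (\<lambda>a. (1/2) * u a + (1/2) * Top r S u a)
       + ip r (\<lambda>a. (1/2) * u a + (-1/2) * Top r S u a) (\<lambda>a. (1/2) * u a + (-1/2) * Top r S u a) = ip r u u"
    by (rule *(1)) simp
  show "ip r (\<lambda>a. (1/2) * u a + (1/2) * Top r S u a) (\<lambda>a. (1/2) * u a + (1/2) * Top r S u a)
       - ip r (\<lambda>a. (1/2) * u a + (-1/2) * Top r S u a) (\<lambda>a. (1/2) * u a + (-1/2) * Top r S u a) = ip r u (Top r S u)"
    by (rule *(2)) simp
qed

lemma split_T:
  assumes Ss: "symm r S" and Si: "invol r S" and Ts: "symm r T" and TS: "commut r T S"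
  shows "ip r (\<lambda>a. (1/2) * u a + (1/2) * Top r S u a) (Top r T (\<lambda>a. (1/2) * u a + (1/2) * Top r S u a))
       + ip r (\<lambda>a. (1/2) * u a + (-1/2) * Top r S u a) (Top r T (\<lambda>a. (1/2) * u a + (-1/2) * Top r S u a)) = ip r u (Top r T u)"
    and "ip r (\<lambda>a. (1/2) * u a + (1/2) * Top r S u a) (Top r T (\<lambda>a. (1/2) * u a + (1/2) * Top r S u a))
       - ip r (\<lambda>a. (1/2) * u a + (-1/2) * Top r S u a) (Top r T (\<lambda>a. (1/2) * u a + (-1/2) * Top r S u a)) = ip r u (Top r T (Top r S u))"
proof -
  have Rresp: "(\<And>a. a < r \<Longrightarrow> x a = y a) \<Longrightarrow> a < r \<Longrightarrow> Top r T x a = Top r T y a" for x y a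
    using Top_resp[of r x y T] by simp
  note * = split_ident[of "Top r T" r S u, OF Top_lin ip_Top[OF Ts] Rresp Top_comm[OF TS] Ss Si]
  show "ip r (\<lambda>a. (1/2) * u a + (1/2) * Top r S u a) (Top r T (\<lambda>a. (1/2) * u a + (1/2) * Top r S u a))
       + ip r (\<lambda>a. (1/2) * u a + (-1/2) * Top r S u a) (Top r T (\<lambda>a. (1/2) * u a + (-1/2) * Top r S u a)) = ip r u (Top r T u)"
    by (rule *(1))
  show "ip r (\<lambda>a. (1/2) * u a + (1/2) * Top r S u a) (Top r T (\<lambda>a. (1/2) * u a + (1/2) * Top r S u a))
       - ip r (\<lambda>a. (1/2) * u a + (-1/2) * Top r S u a) (Top r T (\<lambda>a. (1/2) * u a + (-1/2) * Top r S u a)) = ip r u (Top r T (Top r S u))"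
    by (rule *(2))
qed

lemma split_TT:
  assumes Ss: "symm r S" and Si: "invol r S" and Ts: "symm r T" and TS: "commut r T S"
    and T's: "symm r T'" and T'S: "commut r T' S" and TT': "commut r T T'"
  shows "ip r (\<lambda>a. (1/2) * u a + (1/2) * Top r S u a) (Top r T (Top r T' (\<lambda>a. (1/2) * u a + (1/2) * Top r S u a)))
       + ip r (\<lambda>a. (1/2) * u a + (-1/2) * Top r S u a) (Top r T (Top r T' (\<lambda>a. (1/2) * u a + (-1/2) * Top r S u a)))
       = ip r u (Top r T (Top r T' u))"
proof -
  let ?R = "\<lambda>x. Top r T (Top r T' x)"
  have RL: "?R (\<lambda>a. c * x a + d * y a) = (\<lambda>a. c * ?R x a + d * ?R y a)" for x y c d
    by (simp only: Top_lin)
  have Rsa: "ip r (?R x) y = ip r x (?R y)" for x y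
  proof -
    have "ip r (?R x) y = ip r (Top r T' x) (Top r T y)" by (rule ip_Top[OF Ts])
    also have "\<dots> = ip r x (Top r T' (Top r T y))" by (rule ip_Top[OF T's])
    also have "\<dots> = ip r x (?R y)"
      by (rule ip_cong) (auto simp: Top_comm[OF TT'])
    finally show ?thesis .
  qed
  have Rresp: "(\<And>a. a < r \<Longrightarrow> x a = y a) \<Longrightarrow> a < r \<Longrightarrow> ?R x a = ?R y a" for x y a
    using Top_resp[of r x y T'] by simp
  have RE: "a < r \<Longrightarrow> ?R (Top r S x) a = Top r S (?R x) a" for x a
  proof -
    assume a: "a < r"
    have e1: "Top r T (Top r T' (Top r S x)) = Top r T (Top r S (Top r T' x))"
      by (rule Top_resp, rule Top_comm[OF T'S])
    have "Top r T (Top r S (Top r T' x)) a = Top r S (Top r T (Top r T' x)) a" by (rule Top_comm[OF TS a])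
    then show ?thesis using e1 by simp
  qed
  show ?thesis by (rule split_ident(1)[of ?R r S u, OF RL Rsa Rresp RE Ss Si])
qed

definition cutrep :: "nat \<Rightarrow> nat \<Rightarrow> (nat \<Rightarrow> nat \<Rightarrow> nat \<Rightarrow> real) \<Rightarrow> (nat \<Rightarrow> real) \<Rightarrow> (real vec \<Rightarrow> real) \<Rightarrow> bool" where
  "cutrep n r s u w \<longleftrightarrow> (\<forall>x\<in>sign_vecs n. 0 \<le> w x) \<and> (\<Sum>x\<in>sign_vecs n. w x) = ip r u u \<and>
     (\<forall>i<n. (\<Sum>x\<in>sign_vecs n. w x * x $ i) = ip r u (Top r (s i) u)) \<and>
     (\<forall>i<n. \<forall>j<n. (\<Sum>x\<in>sign_vecs n. w x * (x $ i * x $ j)) = ip r (Top r (s i) u) (Top r (s j) u))"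

lemma cut_core:
  assumes "\<forall>i<n. symm r (s i)" "\<forall>i<n. invol r (s i)" "\<forall>i<n. \<forall>j<n. commut r (s i) (s j)"
  shows "\<exists>w. cutrep n r s u w"
  using assms
proof (induction n arbitrary: u)
  case 0
  show ?case by (rule exI[of _ "\<lambda>_. ip r u u"]) (simp add: cutrep_def sign_vecs_0 ip_nonneg)
next
  case (Suc n)
  let ?E = "Top r (s n)"
  define u1 where "u1 = (\<lambda>a. (1/2) * u a + (1/2) * ?E u a)"
  define u2 where "u2 = (\<lambda>a. (1/2) * u a + (-1/2) * ?E u a)"
  have hyp: "\<forall>i<n. symm r (s i)" "\<forall>i<n. invol r (s i)" "\<forall>i<n. \<forall>j<n. commut r (s i) (s j)"
    using Suc.prems by auto
  have Ss: "symm r (s n)" and Si: "invol r (s n)" using Suc.prems by auto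
  have sy: "i < Suc n \<Longrightarrow> symm r (s i)" for i using Suc.prems by auto
  have co: "i < Suc n \<Longrightarrow> j < Suc n \<Longrightarrow> commut r (s i) (s j)" for i j using Suc.prems by auto
  obtain w1 where w1: "cutrep n r s u1 w1" using Suc.IH[OF hyp] by blast
  obtain w2 where w2: "cutrep n r s u2 w2" using Suc.IH[OF hyp] by blast
  define w where "w = (\<lambda>y. if y $ n = 1 then w1 (vec n (\<lambda>i. y $ i)) else w2 (vec n (\<lambda>i. y $ i)))"
  have we1: "x \<in> sign_vecs n \<Longrightarrow> w (extv n x 1) = w1 x" for x
    unfolding w_def by (simp add: extv_index restr_extv)
  have we2: "x \<in> sign_vecs n \<Longrightarrow> w (extv n x (-1)) = w2 x" for x
    unfolding w_def by (simp add: extv_index restr_extv)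
  have sumw: "(\<Sum>y\<in>sign_vecs (Suc n). w y * g y) =
      (\<Sum>x\<in>sign_vecs n. w1 x * g (extv n x 1) + w2 x * g (extv n x (-1)))" for g
    unfolding sum_sign_vecs_Suc by (intro sum.cong refl) (simp add: we1 we2)
  note w1d = w1[unfolded cutrep_def] and w2d = w2[unfolded cutrep_def]
  have pos: "\<forall>y\<in>sign_vecs (Suc n). 0 \<le> w y"
  proof
    fix y assume "y \<in> sign_vecs (Suc n)"
    then obtain x c where x: "x \<in> sign_vecs n" and c: "c \<in> {1,-1}" and y: "y = extv n x c"
      unfolding sign_vecs_Suc by auto
    show "0 \<le> w y" using c x w1d w2d y we1 we2 by auto
  qed
  have S0: "(\<Sum>y\<in>sign_vecs (Suc n). w y) = ip r u u"
  proof -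
    have "(\<Sum>y\<in>sign_vecs (Suc n). w y) = (\<Sum>y\<in>sign_vecs (Suc n). w y * 1)" by simp
    also have "\<dots> = (\<Sum>x\<in>sign_vecs n. w1 x) + (\<Sum>x\<in>sign_vecs n. w2 x)"
      unfolding sumw by (simp add: sum.distrib)
    also have "\<dots> = ip r u u" using w1d w2d split_id(1)[OF Ss Si, of u] unfolding u1_def u2_def by simp
    finally show ?thesis .
  qed
  have S1: "(\<Sum>y\<in>sign_vecs (Suc n). w y * y $ i) = ip r u (Top r (s i) u)" if i: "i < Suc n" for i
  proof (cases "i < n")
    case True
    have "(\<Sum>y\<in>sign_vecs (Suc n). w y * y $ i) = (\<Sum>x\<in>sign_vecs n. w1 x * x $ i) + (\<Sum>x\<in>sign_vecs n. w2 x * x $ i)"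
      unfolding sumw using True by (simp add: sum.distrib extv_index)
    also have "\<dots> = ip r u1 (Top r (s i) u1) + ip r u2 (Top r (s i) u2)" using w1d w2d True by simp
    also have "\<dots> = ip r u (Top r (s i) u)" unfolding u1_def u2_def
      by (rule split_T(1)[OF Ss Si sy[OF i] co[OF i]]) simp
    finally show ?thesis .
  next
    case False
    then have "i = n" using i by simp
    have "(\<Sum>y\<in>sign_vecs (Suc n). w y * y $ i) = (\<Sum>x\<in>sign_vecs n. w1 x) - (\<Sum>x\<in>sign_vecs n. w2 x)"
      unfolding sumw using \<open>i = n\<close> by (simp add: sum_subtractf extv_index)
    also have "\<dots> = ip r u (Top r (s i) u)" using w1d w2d split_id(2)[OF Ss Si, of u] \<open>i = n\<close>
      unfolding u1_def u2_def by simp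
    finally show ?thesis .
  qed
  have S2: "(\<Sum>y\<in>sign_vecs (Suc n). w y * (y $ i * y $ j)) = ip r (Top r (s i) u) (Top r (s j) u)"
    if i: "i < Suc n" and j: "j < Suc n" for i j
  proof (cases "i < n")
    case True
    note ti = True
    show ?thesis
    proof (cases "j < n")
      case True
      have "(\<Sum>y\<in>sign_vecs (Suc n). w y * (y $ i * y $ j)) = (\<Sum>x\<in>sign_vecs n. w1 x * (x $ i * x $ j)) + (\<Sum>x\<in>sign_vecs n. w2 x * (x $ i * x $ j))"
        unfolding sumw using True ti by (simp add: sum.distrib extv_index)
      also have "\<dots> = ip r (Top r (s i) u1) (Top r (s j) u1) + ip r (Top r (s i) u2) (Top r (s j) u2)"
        using w1d w2d True ti by simp
      also have "\<dots> = ip r u1 (Top r (s i) (Top r (s j) u1)) + ip r u2 (Top r (s i) (Top r (s j) u2))"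
        by (simp add: ip_Top[OF sy[OF i]] ip_sym)
      also have "\<dots> = ip r u (Top r (s i) (Top r (s j) u))" unfolding u1_def u2_def
        by (rule split_TT[OF Ss Si sy[OF i] co[OF i] sy[OF j] co[OF j] co[OF i j]]; simp)
      also have "\<dots> = ip r (Top r (s i) u) (Top r (s j) u)"
        by (simp add: ip_Top[OF sy[OF i]] ip_sym)
      finally show ?thesis .
    next
      case False
      then have "j = n" using j by simp
      have "(\<Sum>y\<in>sign_vecs (Suc n). w y * (y $ i * y $ j)) = (\<Sum>x\<in>sign_vecs n. w1 x * x $ i) - (\<Sum>x\<in>sign_vecs n. w2 x * x $ i)"
        unfolding sumw using \<open>j = n\<close> ti by (simp add: sum_subtractf extv_index)
      also have "\<dots> = ip r u1 (Top r (s i) u1) - ip r u2 (Top r (s i) u2)" using w1d w2d ti by simp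
      also have "\<dots> = ip r u (Top r (s i) (Top r (s n) u))" unfolding u1_def u2_def
        by (rule split_T(2)[OF Ss Si sy[OF i] co[OF i]]) simp
      also have "\<dots> = ip r (Top r (s i) u) (Top r (s j) u)"
        using \<open>j = n\<close> by (simp add: ip_Top[OF sy[OF i]])
      finally show ?thesis .
    qed
  next
    case False
    then have "i = n" using i by simp
    show ?thesis
    proof (cases "j < n")
      case True
      have "(\<Sum>y\<in>sign_vecs (Suc n). w y * (y $ i * y $ j)) = (\<Sum>x\<in>sign_vecs n. w1 x * x $ j) - (\<Sum>x\<in>sign_vecs n. w2 x * x $ j)"
        unfolding sumw using \<open>i = n\<close> True by (simp add: sum_subtractf extv_index)
      also have "\<dots> = ip r u1 (Top r (s j) u1) - ip r u2 (Top r (s j) u2)" using w1d w2d True by simp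
      also have "\<dots> = ip r u (Top r (s j) (Top r (s n) u))" unfolding u1_def u2_def
        by (rule split_T(2)[OF Ss Si sy[OF j] co[OF j]]) simp
      also have "\<dots> = ip r (Top r (s i) u) (Top r (s j) u)"
        using \<open>i = n\<close> by (simp add: ip_Top[OF sy[OF j]] ip_sym)
      finally show ?thesis .
    next
      case False
      then have "j = n" using j by simp
      have "(\<Sum>y\<in>sign_vecs (Suc n). w y * (y $ i * y $ j)) = (\<Sum>x\<in>sign_vecs n. w1 x) + (\<Sum>x\<in>sign_vecs n. w2 x)"
        unfolding sumw using \<open>i = n\<close> \<open>j = n\<close> by (simp add: sum.distrib extv_index)
      also have "\<dots> = ip r u u" using w1d w2d split_id(1)[OF Ss Si, of u] unfolding u1_def u2_def by simp
      also have "\<dots> = ip r u (Top r (s n) (Top r (s n) u))"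
        by (rule ip_cong) (simp_all add: Top_Top_inv[OF Si])
      also have "\<dots> = ip r (Top r (s i) u) (Top r (s j) u)"
        using \<open>i = n\<close> \<open>j = n\<close> by (simp add: ip_Top[OF Ss])
      finally show ?thesis .
    qed
  qed
  show ?case unfolding cutrep_def using pos S0 S1 S2 by blast
qed


lemma idx_lt: fixes i a r N :: nat assumes "i < N" "a < r" shows "i * r + a < r * N"
proof -
  have "i * r + a < i * r + r" using assms by simp
  also have "\<dots> = Suc i * r" by simp
  also have "\<dots> \<le> N * r" using assms by (intro mult_le_mono1) simp
  finally show ?thesis by (simp add: mult.commute)
qed

lemma sum_blocks: fixes r N :: nat shows "(\<Sum>q<r*N. F q) = (\<Sum>j<N. \<Sum>b<r. F (j*r+b))"
proof (induction N)
  case 0 then show ?case by simp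
next
  case (Suc N)
  have "(\<Sum>q<r*Suc N. F q) = (\<Sum>q<r*N + r. F q)" by (simp add: algebra_simps)
  also have "\<dots> = (\<Sum>q<r*N. F q) + (\<Sum>q\<in>{r*N..<r*N+r}. F q)"
  proof -
    have "{..<r*N + r} = {..<r*N} \<union> {r*N..<r*N+r}" by auto
    then show ?thesis by (simp add: sum.union_disjoint[symmetric] ivl_disj_int)
  qed
  also have "(\<Sum>q\<in>{r*N..<r*N+r}. F q) = (\<Sum>b<r. F (N*r+b))"
    using sum.shift_bounds_nat_ivl[of F 0 "r*N" r] by (simp add: atLeast0LessThan algebra_simps)
  finally show ?case using Suc by simp
qed

lemma sq_diff_ident: fixes x :: "nat \<Rightarrow> real" assumes "finite I"
  shows "(\<Sum>i\<in>I. \<Sum>j\<in>I. (x i - x j)^2) = 2 * real (card I) * (\<Sum>i\<in>I. (x i)^2) - 2 * (\<Sum>i\<in>I. x i)^2"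
proof -
  have "(\<Sum>i\<in>I. \<Sum>j\<in>I. (x i - x j)^2) = (\<Sum>i\<in>I. \<Sum>j\<in>I. (x i)^2 + (x j)^2 - 2 * (x i * x j))"
    by (simp add: power2_diff algebra_simps)
  also have "\<dots> = (\<Sum>i\<in>I. \<Sum>j\<in>I. (x i)^2) + (\<Sum>i\<in>I. \<Sum>j\<in>I. (x j)^2) - 2 * (\<Sum>i\<in>I. \<Sum>j\<in>I. x i * x j)"
    by (simp add: sum.distrib sum_subtractf sum_distrib_left)
  also have "(\<Sum>i\<in>I. \<Sum>j\<in>I. x i * x j) = (\<Sum>i\<in>I. x i)^2"
    by (simp add: power2_eq_square sum_product)
  also have "(\<Sum>i\<in>I. \<Sum>j\<in>I. (x i)^2) = real (card I) * (\<Sum>i\<in>I. (x i)^2)"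
    by (simp add: sum_distrib_left mult.commute)
  also have "(\<Sum>i\<in>I. \<Sum>j\<in>I. (x j)^2) = real (card I) * (\<Sum>i\<in>I. (x i)^2)"
    by simp
  finally show ?thesis by simp
qed

lemma derive_struct:
  fixes N r :: nat and v :: "nat \<Rightarrow> real vec" and M :: "real mat"
  assumes N: "0 < N" and MB: "M \<in> B_set N r" and rk: "mat_rank M = r"
    and s_def: "s = (\<lambda>i a b. M $$ (i * r + a, b))"
  shows "(\<forall>i<N. symm r (s i)) \<and> (\<forall>i<N. invol r (s i)) \<and> (\<forall>i<N. \<forall>j<N. commut r (s i) (s j))
    \<and> (\<forall>i<N. \<forall>j<N. \<forall>a<r. \<forall>b<r. M $$ (i*r+a, j*r+b) = (\<Sum>k<r. s i a k * s j k b))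
    \<and> M \<in> carrier_mat (r*N) (r*N) \<and> (\<forall>p<r*N. \<forall>q<r*N. M $$ (p,q) = M $$ (q,p))
    \<and> (\<forall>p<r*N. \<forall>q<r*N. M $$ (p,q) = (\<Sum>k<r. M $$ (p,k) * M $$ (k,q)))"
proof -
  have Mc: "M \<in> carrier_mat (r*N) (r*N)" and Mt: "transpose_mat M = M"
    and bd: "\<And>i. i < N \<Longrightarrow> block_mat r M i i = 1\<^sub>m r"
    and bs: "\<And>i j. i < N \<Longrightarrow> j < N \<Longrightarrow> transpose_mat (block_mat r M i j) = block_mat r M i j"
    using MB unfolding B_set_def by auto
  have Msym: "M $$ (p,q) = M $$ (q,p)" if "p < r*N" "q < r*N" for p q
  proof -
    have "transpose_mat M $$ (q,p) = M $$ (p,q)" using that Mc by simp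
    then show ?thesis using Mt by simp
  qed
  have bde: "M $$ (i*r+a, i*r+b) = (if a = b then 1 else 0)" if "i < N" "a < r" "b < r" for i a b
  proof -
    have "block_mat r M i i $$ (a,b) = M $$ (i*r+a, i*r+b)" using that unfolding block_mat_def by simp
    then show ?thesis using bd[OF that(1)] that by simp
  qed
  have bse: "M $$ (i*r+b, j*r+a) = M $$ (i*r+a, j*r+b)" if "i < N" "j < N" "a < r" "b < r" for i j a b
  proof -
    have "transpose_mat (block_mat r M i j) $$ (a,b) = block_mat r M i j $$ (b,a)" using that
      unfolding block_mat_def by simp
    also have "\<dots> = M $$ (i*r+b, j*r+a)" using that unfolding block_mat_def by simp
    finally have "M $$ (i*r+b, j*r+a) = transpose_mat (block_mat r M i j) $$ (a,b)" by simp
    also have "\<dots> = block_mat r M i j $$ (a,b)" using bs[OF that(1,2)] by simp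
    also have "\<dots> = M $$ (i*r+a, j*r+b)" using that unfolding block_mat_def by simp
    finally show ?thesis .
  qed
  have idb: "M $$ (a,b) = (if a = b then 1 else 0)" if "a < r" "b < r" for a b
    using bde[OF N that] by simp
  have rk': "vec_space.rank (r*N) M \<le> r" using rk Mc unfolding mat_rank_def by simp
  have fac: "M $$ (p,q) = (\<Sum>k<r. M $$ (p,k) * M $$ (k,q))" if "p < r*N" "q < r*N" for p q
    by (rule minor_factor[OF Mc idb rk' that]) auto
  have ssym: "s i a b = s i b a" if "i < N" "a < r" "b < r" for i a b
    using bse[OF that(1) N that(2,3)] unfolding s_def by simp
  have F2: "M $$ (i*r+a, j*r+b) = (\<Sum>k<r. s i a k * s j k b)"
    if "i < N" "j < N" "a < r" "b < r" for i j a b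
  proof -
    have "M $$ (i*r+a, j*r+b) = (\<Sum>k<r. M $$ (i*r+a,k) * M $$ (k,j*r+b))"
      by (rule fac) (use that idx_lt in auto)
    also have "\<dots> = (\<Sum>k<r. s i a k * s j k b)"
    proof (rule sum.cong)
      fix k assume k: "k \<in> {..<r}"
      have "M $$ (k,j*r+b) = M $$ (j*r+b, k)"
        by (rule Msym) (use that k idx_lt N in \<open>auto intro: idx_lt[of 0 N k r, simplified]\<close>)
      also have "\<dots> = s j b k" unfolding s_def ..
      also have "\<dots> = s j k b" using ssym[OF that(2) _ that(4)] k by simp
      finally show "M $$ (i*r+a,k) * M $$ (k,j*r+b) = s i a k * s j k b" unfolding s_def by simp
    qed simp
    finally show ?thesis .
  qed
  have sy: "\<forall>i<N. symm r (s i)" unfolding symm_def using ssym by auto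
  have inv: "\<forall>i<N. invol r (s i)" unfolding invol_def using F2 bde by auto
  have com: "\<forall>i<N. \<forall>j<N. commut r (s i) (s j)"
  proof (intro allI impI)
    fix i j assume i: "i < N" and j: "j < N"
    show "commut r (s i) (s j)" unfolding commut_def
    proof (intro allI impI)
      fix a b assume a: "a < r" and b: "b < r"
      have "(\<Sum>k<r. s i a k * s j k b) = M $$ (i*r+a, j*r+b)" using F2 i j a b by simp
      also have "\<dots> = M $$ (i*r+b, j*r+a)" using bse i j a b by simp
      also have "\<dots> = (\<Sum>k<r. s i b k * s j k a)" using F2 i j a b by simp
      also have "\<dots> = (\<Sum>k<r. s j a k * s i k b)"
        by (rule sum.cong) (use ssym i j a b in auto)
      finally show "(\<Sum>k<r. s i a k * s j k b) = (\<Sum>k<r. s j a k * s i k b)" .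
    qed
  qed
  show ?thesis using sy inv com F2 Mc Msym fac by blast
qed

lemma derive_u:
  fixes N r :: nat and v :: "nat \<Rightarrow> real vec" and M :: "real mat"
  assumes N: "0 < N" and vc: "\<forall>i<N. v i \<in> carrier_vec r" and sumv: "(\<Sum>i<N. v i \<bullet> v i) = real N"
    and MB: "M \<in> B_set N r" and rk: "mat_rank M = r"
    and Q: "concat_vecs r N v \<bullet> (M *\<^sub>v concat_vecs r N v) = real N ^ 2"
  shows "\<exists>s u. (\<forall>i<N. symm r (s i)) \<and> (\<forall>i<N. invol r (s i)) \<and> (\<forall>i<N. \<forall>j<N. commut r (s i) (s j))
     \<and> ip r u u = 1 \<and> (\<forall>i<N. \<forall>b<r. v i $ b = Top r (s i) u b)"
proof -
  define s where "s = (\<lambda>i a b. M $$ (i * r + a, b))"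
  note st = derive_struct[OF N MB rk s_def]
  have sy: "\<forall>i<N. symm r (s i)" and inv: "\<forall>i<N. invol r (s i)" and com: "\<forall>i<N. \<forall>j<N. commut r (s i) (s j)"
    and Mc: "M \<in> carrier_mat (r*N) (r*N)"
    using st by auto
  have Msym: "\<And>p q. p < r*N \<Longrightarrow> q < r*N \<Longrightarrow> M $$ (p,q) = M $$ (q,p)"
    using st by blast
  have fac: "\<And>p q. p < r*N \<Longrightarrow> q < r*N \<Longrightarrow> M $$ (p,q) = (\<Sum>k<r. M $$ (p,k) * M $$ (k,q))"
    using st by blast
  have ssym: "s i a b = s i b a" if "i < N" "a < r" "b < r" for i a b
    using sy that unfolding symm_def by auto
  have kr: "k < r \<Longrightarrow> k < r * N" for k using idx_lt[OF N, of k r] by simp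
  define V where "V = concat_vecs r N v"
  have dV: "dim_vec V = r * N" unfolding V_def concat_vecs_def by simp
  have Vjb: "V $ (j*r+b) = v j $ b" if "j < N" "b < r" for j b
  proof -
    have "(j*r+b) div r = j" "(j*r+b) mod r = b" using that by auto
    then show ?thesis unfolding V_def concat_vecs_def using idx_lt[OF that] by simp
  qed
  define A where "A = (\<lambda>k. \<Sum>q<r*N. M $$ (k,q) * V $ q)"
  define vv where "vv = (\<lambda>j b. v j $ b)"
  define a where "a = (\<lambda>j. Top r (s j) (vv j))"
  have Q1: "V \<bullet> (M *\<^sub>v V) = (\<Sum>p<r*N. V $ p * (\<Sum>q<r*N. M $$ (p,q) * V $ q))"
    using Mc dV by (simp add: scalar_prod_def row_def lessThan_atLeast0 mult.commute)
  have Q2: "(\<Sum>q<r*N. M $$ (p,q) * V $ q) = (\<Sum>k<r. M $$ (p,k) * A k)" if p: "p < r*N" for p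
  proof -
    have "(\<Sum>q<r*N. M $$ (p,q) * V $ q) = (\<Sum>q<r*N. \<Sum>k<r. M $$ (p,k) * M $$ (k,q) * V $ q)"
      by (rule sum.cong) (simp_all add: fac[OF p] sum_distrib_right)
    also have "\<dots> = (\<Sum>k<r. \<Sum>q<r*N. M $$ (p,k) * M $$ (k,q) * V $ q)" by (rule sum.swap)
    also have "\<dots> = (\<Sum>k<r. M $$ (p,k) * A k)" unfolding A_def
      by (simp add: sum_distrib_left mult.assoc)
    finally show ?thesis .
  qed
  have Q3: "V \<bullet> (M *\<^sub>v V) = (\<Sum>k<r. (A k)^2)"
  proof -
    have "V \<bullet> (M *\<^sub>v V) = (\<Sum>p<r*N. \<Sum>k<r. V $ p * M $$ (p,k) * A k)"
      unfolding Q1 by (rule sum.cong) (simp_all add: Q2 sum_distrib_left mult.assoc)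
    also have "\<dots> = (\<Sum>k<r. \<Sum>p<r*N. V $ p * M $$ (p,k) * A k)" by (rule sum.swap)
    also have "\<dots> = (\<Sum>k<r. A k * A k)"
    proof (rule sum.cong)
      fix k assume k: "k \<in> {..<r}"
      have "(\<Sum>p<r*N. V $ p * M $$ (p,k) * A k) = (\<Sum>p<r*N. M $$ (k,p) * V $ p) * A k"
        by (simp add: sum_distrib_right) (rule sum.cong, use k kr Msym in auto)
      then show "(\<Sum>p<r*N. V $ p * M $$ (p,k) * A k) = A k * A k" unfolding A_def by simp
    qed simp
    finally show ?thesis by (simp add: power2_eq_square)
  qed
  have A_a: "A k = (\<Sum>j<N. a j k)" if k: "k < r" for k
  proof -
    have "A k = (\<Sum>j<N. \<Sum>b<r. M $$ (k, j*r+b) * V $ (j*r+b))" unfolding A_def by (rule sum_blocks)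
    also have "\<dots> = (\<Sum>j<N. \<Sum>b<r. s j k b * vv j b)"
    proof (intro sum.cong refl)
      fix j b assume j: "j \<in> {..<N}" and b: "b \<in> {..<r}"
      have "M $$ (k, j*r+b) = M $$ (j*r+b, k)" using j b k kr idx_lt Msym by auto
      also have "\<dots> = s j k b" using ssym j b k unfolding s_def by auto
      finally show "M $$ (k, j*r+b) * V $ (j*r+b) = s j k b * vv j b" using Vjb j b unfolding vv_def by simp
    qed
    also have "\<dots> = (\<Sum>j<N. a j k)" unfolding a_def Top_def ..
    finally show ?thesis .
  qed
  have na: "ip r (a j) (a j) = v j \<bullet> v j" if j: "j < N" for j
  proof -
    have sj: "symm r (s j)" and ij: "invol r (s j)" using sy inv j by auto
    have "ip r (a j) (a j) = ip r (vv j) (Top r (s j) (Top r (s j) (vv j)))"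
      unfolding a_def by (rule ip_Top[OF sj])
    also have "\<dots> = ip r (vv j) (vv j)" by (rule ip_cong) (simp_all add: Top_Top_inv[OF ij])
    also have "\<dots> = v j \<bullet> v j"
    proof -
      have "dim_vec (v j) = r" using vc j by auto
      then show ?thesis unfolding ip_def vv_def scalar_prod_def by (simp add: lessThan_atLeast0)
    qed
    finally show ?thesis .
  qed
  have sumsq: "(\<Sum>k<r. (\<Sum>j<N. a j k)^2) = real N ^ 2" using Q Q3 A_a unfolding V_def by simp
  have sumn: "(\<Sum>j<N. \<Sum>k<r. (a j k)^2) = real N" using sumv na unfolding ip_def
    by (simp add: power2_eq_square)
  have zero: "(\<Sum>k<r. \<Sum>i<N. \<Sum>j<N. (a i k - a j k)^2) = 0"
  proof -
    have "(\<Sum>k<r. \<Sum>i<N. \<Sum>j<N. (a i k - a j k)^2) = (\<Sum>k<r. 2 * real N * (\<Sum>i<N. (a i k)^2) - 2 * (\<Sum>i<N. a i k)^2)"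
      by (rule sum.cong) (simp_all add: sq_diff_ident)
    also have "\<dots> = 2 * real N * (\<Sum>k<r. \<Sum>i<N. (a i k)^2) - 2 * (\<Sum>k<r. (\<Sum>i<N. a i k)^2)"
      by (simp add: sum_subtractf sum_distrib_left)
    also have "(\<Sum>k<r. \<Sum>i<N. (a i k)^2) = real N" using sumn by (simp add: sum.swap[of _ "{..<r}"])
    finally show ?thesis using sumsq by (simp add: power2_eq_square)
  qed
  have eqa: "a i k = a j k" if "i < N" "j < N" "k < r" for i j k
  proof -
    have nn1: "\<And>k. k \<in> {..<r} \<Longrightarrow> 0 \<le> (\<Sum>i<N. \<Sum>j<N. (a i k - a j k)^2)"
      by (intro sum_nonneg) simp
    have "\<forall>k\<in>{..<r}. (\<Sum>i<N. \<Sum>j<N. (a i k - a j k)^2) = 0"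
      using iffD1[OF sum_nonneg_eq_0_iff[OF finite_lessThan nn1] zero] .
    then have z1: "(\<Sum>i<N. \<Sum>j<N. (a i k - a j k)^2) = 0" using that(3) by blast
    have nn2: "\<And>i. i \<in> {..<N} \<Longrightarrow> 0 \<le> (\<Sum>j<N. (a i k - a j k)^2)"
      by (intro sum_nonneg) simp
    have "\<forall>i\<in>{..<N}. (\<Sum>j<N. (a i k - a j k)^2) = 0"
      using iffD1[OF sum_nonneg_eq_0_iff[OF finite_lessThan nn2] z1] .
    then have z2: "(\<Sum>j<N. (a i k - a j k)^2) = 0" using that(1) by blast
    have nn3: "\<And>j. j \<in> {..<N} \<Longrightarrow> 0 \<le> (a i k - a j k)^2" by simp
    have "\<forall>j\<in>{..<N}. (a i k - a j k)^2 = 0"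
      using iffD1[OF sum_nonneg_eq_0_iff[OF finite_lessThan nn3] z2] .
    then have "(a i k - a j k)^2 = 0" using that(2) by blast
    then show ?thesis by simp
  qed
  define u where "u = a 0"
  have uu: "ip r u u = 1"
  proof -
    have "real N = (\<Sum>j<N. ip r (a j) (a j))" using sumv na by simp
    also have "\<dots> = (\<Sum>j<N. ip r u u)"
    proof (rule sum.cong)
      fix j assume j: "j \<in> {..<N}"
      show "ip r (a j) (a j) = ip r u u"
        by (rule ip_cong) (use j N eqa[of j 0] in \<open>auto simp: u_def\<close>)
    qed simp
    also have "\<dots> = real N * ip r u u" by simp
    finally show ?thesis using N by simp
  qed
  have vu: "v i $ b = Top r (s i) u b" if i: "i < N" and b: "b < r" for i b
  proof -
    have ij: "invol r (s i)" using inv i by auto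
    have "v i $ b = Top r (s i) (a i) b" unfolding a_def using Top_Top_inv[OF ij b] vv_def by simp
    also have "Top r (s i) (a i) = Top r (s i) u"
      by (rule Top_resp) (use eqa[of i 0] i N in \<open>simp add: u_def\<close>)
    finally show ?thesis .
  qed
  show ?thesis using sy inv com uu vu by blast
qed

lemma diag_sq:
  fixes p :: "nat \<Rightarrow> nat \<Rightarrow> real"
  assumes sy: "\<forall>a<n. \<forall>b<n. p a b = p b a" and id: "\<forall>a<n. \<forall>b<n. (\<Sum>c<n. p a c * p c b) = p a b"
    and a: "a < n"
  shows "p a a = (\<Sum>c<n. (p a c)^2)"
proof -
  have "p a a = (\<Sum>c<n. p a c * p c a)" using id a by simp
  also have "\<dots> = (\<Sum>c<n. (p a c)^2)"
  proof (rule sum.cong)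
    fix c assume "c \<in> {..<n}"
    then have "p c a = p a c" using sy a by simp
    then show "p a c * p c a = (p a c)^2" by (simp add: power2_eq_square)
  qed simp
  finally show ?thesis .
qed

lemma trace_nat_aux:
  fixes n :: nat
  shows "\<forall>p :: nat \<Rightarrow> nat \<Rightarrow> real. (\<forall>a<n. \<forall>b<n. p a b = p b a) \<longrightarrow>
     (\<forall>a<n. \<forall>b<n. (\<Sum>c<n. p a c * p c b) = p a b) \<longrightarrow> (\<Sum>a<n. p a a) \<le> real k \<longrightarrow>
     (\<exists>m::nat. (\<Sum>a<n. p a a) = real m)"
proof (induction k)
  case 0
  show ?case
  proof (intro allI impI)
    fix p :: "nat \<Rightarrow> nat \<Rightarrow> real"
    assume sy: "\<forall>a<n. \<forall>b<n. p a b = p b a" and id: "\<forall>a<n. \<forall>b<n. (\<Sum>c<n. p a c * p c b) = p a b"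
      and le: "(\<Sum>a<n. p a a) \<le> real 0"
    have "(\<Sum>a<n. p a a) = (\<Sum>a<n. \<Sum>c<n. (p a c)^2)"
      by (rule sum.cong) (use diag_sq[OF sy id] in auto)
    also have "\<dots> \<ge> 0" by (intro sum_nonneg) simp
    finally have "(\<Sum>a<n. p a a) = 0" using le by simp
    then show "\<exists>m::nat. (\<Sum>a<n. p a a) = real m" by (intro exI[of _ 0]) simp
  qed
next
  case (Suc k)
  show ?case
  proof (intro allI impI)
    fix p :: "nat \<Rightarrow> nat \<Rightarrow> real"
    assume sy: "\<forall>a<n. \<forall>b<n. p a b = p b a" and id: "\<forall>a<n. \<forall>b<n. (\<Sum>c<n. p a c * p c b) = p a b"
      and le: "(\<Sum>a<n. p a a) \<le> real (Suc k)"
    have diag: "p a a = (\<Sum>c<n. (p a c)^2)" if "a < n" for a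
      by (rule diag_sq[OF sy id that])
    show "\<exists>m::nat. (\<Sum>a<n. p a a) = real m"
    proof (cases "\<exists>j<n. p j j \<noteq> 0")
      case False
      then have "(\<Sum>a<n. p a a) = 0" by simp
      then show ?thesis by (intro exI[of _ 0]) simp
    next
      case True
      then obtain j where j: "j < n" and d0: "p j j \<noteq> 0" by blast
      define d where "d = p j j"
      have dpos: "d > 0" using diag[OF j] d0 unfolding d_def
        by (metis le_less sum_nonneg zero_le_power2)
      define p' where "p' = (\<lambda>a b. p a b - p a j * p b j / d)"
      have sy': "\<forall>a<n. \<forall>b<n. p' a b = p' b a" using sy unfolding p'_def by (auto simp: mult.commute)
      have id': "\<forall>a<n. \<forall>b<n. (\<Sum>c<n. p' a c * p' c b) = p' a b"
      proof (intro allI impI)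
        fix a b assume a: "a < n" and b: "b < n"
        have e1: "(\<Sum>c<n. p a c * p c b) = p a b" using id a b by simp
        have e2: "(\<Sum>c<n. p a c * p c j) = p a j" using id a j by simp
        have e3: "(\<Sum>c<n. p c j * p c b) = p b j"
        proof -
          have "(\<Sum>c<n. p c j * p c b) = (\<Sum>c<n. p j c * p c b)" by (rule sum.cong) (use sy j in auto)
          also have "\<dots> = p j b" using id j b by simp
          finally show ?thesis using sy j b by simp
        qed
        have e4: "(\<Sum>c<n. p c j * p c j) = d"
        proof -
          have "(\<Sum>c<n. p c j * p c j) = (\<Sum>c<n. p j c * p c j)" by (rule sum.cong) (use sy j in auto)
          also have "\<dots> = d" using id j unfolding d_def by simp
          finally show ?thesis .
        qed
        have "(\<Sum>c<n. p' a c * p' c b) = (\<Sum>c<n. p a c * p c b) - p b j / d * (\<Sum>c<n. p a c * p c j)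
            - p a j / d * (\<Sum>c<n. p c j * p c b) + p a j * p b j / (d * d) * (\<Sum>c<n. p c j * p c j)"
          unfolding p'_def by (simp add: algebra_simps sum_subtractf sum.distrib sum_distrib_left sum_divide_distrib)
        also have "\<dots> = p' a b" unfolding e1 e2 e3 e4 p'_def using dpos by (simp add: field_simps)
        finally show "(\<Sum>c<n. p' a c * p' c b) = p' a b" .
      qed
      have tr': "(\<Sum>a<n. p' a a) = (\<Sum>a<n. p a a) - 1"
      proof -
        have "(\<Sum>a<n. p' a a) = (\<Sum>a<n. p a a) - (\<Sum>a<n. p a j * p a j) / d"
          unfolding p'_def by (simp add: sum_subtractf sum_divide_distrib)
        also have "(\<Sum>a<n. p a j * p a j) = d"
        proof -
          have "(\<Sum>c<n. p c j * p c j) = (\<Sum>c<n. p j c * p c j)" by (rule sum.cong) (use sy j in auto)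
          also have "\<dots> = d" using id j unfolding d_def by simp
          finally show ?thesis .
        qed
        finally show ?thesis using dpos by simp
      qed
      have "(\<Sum>a<n. p' a a) \<le> real k" using tr' le by simp
      then obtain m where "(\<Sum>a<n. p' a a) = real m" using Suc.IH sy' id' by blast
      then show ?thesis using tr' by (intro exI[of _ "Suc m"]) simp
    qed
  qed
qed

lemma trace_nat:
  fixes p :: "nat \<Rightarrow> nat \<Rightarrow> real"
  assumes "\<forall>a<n. \<forall>b<n. p a b = p b a" "\<forall>a<n. \<forall>b<n. (\<Sum>c<n. p a c * p c b) = p a b"
  shows "\<exists>m::nat. (\<Sum>a<n. p a a) = real m"
proof -
  have le: "(\<Sum>a<n. p a a) \<le> real (nat \<lceil>\<Sum>a<n. p a a\<rceil>)" by (rule real_nat_ceiling_ge)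
  show ?thesis using trace_nat_aux[of n "nat \<lceil>\<Sum>a<n. p a a\<rceil>"] assms le by blast
qed

definition mm :: "nat \<Rightarrow> (nat \<Rightarrow> nat \<Rightarrow> real) \<Rightarrow> (nat \<Rightarrow> nat \<Rightarrow> real) \<Rightarrow> (nat \<Rightarrow> nat \<Rightarrow> real)" where
  "mm n X Y = (\<lambda>a b. \<Sum>k<n. X a k * Y k b)"
definition Imat :: "nat \<Rightarrow> nat \<Rightarrow> real" where "Imat = (\<lambda>a b. if a = b then 1 else 0)"
definition half :: "(nat \<Rightarrow> nat \<Rightarrow> real) \<Rightarrow> (nat \<Rightarrow> nat \<Rightarrow> real)" where
  "half Z = (\<lambda>a b. (1/2) * Imat a b + (1/2) * Z a b)"
definition opcomm :: "nat \<Rightarrow> (nat \<Rightarrow> nat \<Rightarrow> real) \<Rightarrow> (nat \<Rightarrow> nat \<Rightarrow> real) \<Rightarrow> bool" where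
  "opcomm n Z S \<longleftrightarrow> (\<forall>x a. a < n \<longrightarrow> Top n Z (Top n S x) a = Top n S (Top n Z x) a)"
definition selfadj :: "nat \<Rightarrow> (nat \<Rightarrow> nat \<Rightarrow> real) \<Rightarrow> bool" where
  "selfadj n Z \<longleftrightarrow> (\<forall>x y. ip n (Top n Z x) y = ip n x (Top n Z y))"
definition involop :: "nat \<Rightarrow> (nat \<Rightarrow> nat \<Rightarrow> real) \<Rightarrow> bool" where
  "involop n Z \<longleftrightarrow> (\<forall>x a. a < n \<longrightarrow> Top n Z (Top n Z x) a = x a)"
definition idemop :: "nat \<Rightarrow> (nat \<Rightarrow> nat \<Rightarrow> real) \<Rightarrow> bool" where
  "idemop n Z \<longleftrightarrow> (\<forall>x a. a < n \<longrightarrow> Top n Z (Top n Z x) a = Top n Z x a)"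

lemma Top_mm: "Top n (mm n X Y) x = Top n X (Top n Y x)"
proof (rule ext)
  fix a show "Top n (mm n X Y) x a = Top n X (Top n Y x) a"
    unfolding Top_Top_expand by (simp add: mm_def Top_def)
qed

lemma Top_Imat: assumes "a < n" shows "Top n Imat x a = x a"
proof -
  have "Top n Imat x a = (\<Sum>b<n. if a = b then x b else 0)"
    unfolding Top_def Imat_def by (rule sum.cong) auto
  then show ?thesis using assms by simp
qed

lemma Top_mlin: "Top n (\<lambda>a b. c * P a b + d * Q a b) x = (\<lambda>a. c * Top n P x a + d * Top n Q x a)"
  unfolding Top_def by (simp add: algebra_simps sum.distrib sum_distrib_left)

lemma Top_half: "Top n (half Z) x = (\<lambda>a. (1/2) * Top n Imat x a + (1/2) * Top n Z x a)"
  unfolding half_def by (rule Top_mlin)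

lemma Top_half_at: "a < n \<Longrightarrow> Top n (half Z) x a = (1/2) * x a + (1/2) * Top n Z x a"
  by (simp add: Top_half Top_Imat)

lemma symm_selfadj: "symm n S \<Longrightarrow> selfadj n S"
  unfolding selfadj_def by (simp add: ip_Top)

lemma commut_opcomm: "commut n S T \<Longrightarrow> opcomm n S T"
  unfolding opcomm_def using Top_comm by blast

lemma invol_involop: "invol n S \<Longrightarrow> involop n S"
  unfolding involop_def by (simp add: Top_Top_inv)

lemma opcomm_sym: "opcomm n Z S \<Longrightarrow> opcomm n S Z"
  unfolding opcomm_def by metis

lemma mm_selfadj:
  assumes "selfadj n Z1" "selfadj n Z2" "opcomm n Z1 Z2"
  shows "selfadj n (mm n Z1 Z2)"
  unfolding selfadj_def
proof (intro allI)
  fix x y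
  have "ip n (Top n (mm n Z1 Z2) x) y = ip n (Top n Z1 (Top n Z2 x)) y" by (simp add: Top_mm)
  also have "\<dots> = ip n (Top n Z2 x) (Top n Z1 y)" using assms(1) unfolding selfadj_def by blast
  also have "\<dots> = ip n x (Top n Z2 (Top n Z1 y))" using assms(2) unfolding selfadj_def by blast
  also have "\<dots> = ip n x (Top n Z1 (Top n Z2 y))"
    by (rule ip_cong) (use assms(3) in \<open>simp_all add: opcomm_def\<close>)
  also have "\<dots> = ip n x (Top n (mm n Z1 Z2) y)" by (simp add: Top_mm)
  finally show "ip n (Top n (mm n Z1 Z2) x) y = ip n x (Top n (mm n Z1 Z2) y)" .
qed

lemma mm_opcomm:
  assumes "opcomm n Z1 S" "opcomm n Z2 S"
  shows "opcomm n (mm n Z1 Z2) S"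
  unfolding opcomm_def
proof (intro allI impI)
  fix x a assume a: "a < n"
  have e: "Top n Z1 (Top n Z2 (Top n S x)) = Top n Z1 (Top n S (Top n Z2 x))"
    by (rule Top_resp) (use assms(2) in \<open>simp add: opcomm_def\<close>)
  have "Top n Z1 (Top n S (Top n Z2 x)) a = Top n S (Top n Z1 (Top n Z2 x)) a"
    using assms(1) a unfolding opcomm_def by blast
  then show "Top n (mm n Z1 Z2) (Top n S x) a = Top n S (Top n (mm n Z1 Z2) x) a"
    using e by (simp add: Top_mm)
qed

lemma mm_involop:
  assumes "involop n Z1" "involop n Z2" "opcomm n Z1 Z2"
  shows "involop n (mm n Z1 Z2)"
  unfolding involop_def
proof (intro allI impI)
  fix x a assume a: "a < n"
  have e: "Top n Z1 (Top n Z2 (Top n Z1 (Top n Z2 x))) = Top n Z1 (Top n Z1 (Top n Z2 (Top n Z2 x)))"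
    by (rule Top_resp) (use assms(3) in \<open>simp add: opcomm_def\<close>)
  have "Top n Z1 (Top n Z1 (Top n Z2 (Top n Z2 x))) a = Top n Z2 (Top n Z2 x) a"
    using assms(1) a unfolding involop_def by blast
  also have "\<dots> = x a" using assms(2) a unfolding involop_def by blast
  finally show "Top n (mm n Z1 Z2) (Top n (mm n Z1 Z2) x) a = x a"
    using e by (simp add: Top_mm)
qed

lemma half_selfadj: assumes "selfadj n Z" shows "selfadj n (half Z)"
  unfolding selfadj_def
proof (intro allI)
  fix x y
  have "ip n (Top n (half Z) x) y = (1/2) * ip n x y + (1/2) * ip n (Top n Z x) y"
  proof -
    have "ip n (Top n (half Z) x) y = ip n (\<lambda>a. (1/2) * x a + (1/2) * Top n Z x a) y"
      by (rule ip_cong) (simp_all add: Top_half_at)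
    then show ?thesis by (simp only: ip_lin)
  qed
  also have "\<dots> = (1/2) * ip n x y + (1/2) * ip n x (Top n Z y)" using assms unfolding selfadj_def by simp
  also have "\<dots> = ip n x (Top n (half Z) y)"
  proof -
    have "ip n x (Top n (half Z) y) = ip n x (\<lambda>a. (1/2) * y a + (1/2) * Top n Z y a)"
      by (rule ip_cong) (simp_all add: Top_half_at)
    then show ?thesis by (simp only: ip_lin2)
  qed
  finally show "ip n (Top n (half Z) x) y = ip n x (Top n (half Z) y)" .
qed

lemma half_opcomm: assumes "opcomm n Z S" shows "opcomm n (half Z) S"
  unfolding opcomm_def
proof (intro allI impI)
  fix x a assume a: "a < n"
  have "Top n (half Z) (Top n S x) a = (1/2) * Top n S x a + (1/2) * Top n Z (Top n S x) a"
    using a by (rule Top_half_at)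
  also have "\<dots> = (1/2) * Top n S x a + (1/2) * Top n S (Top n Z x) a"
    using assms a unfolding opcomm_def by simp
  also have "\<dots> = Top n S (\<lambda>c. (1/2) * x c + (1/2) * Top n Z x c) a"
    by (simp only: Top_lin)
  also have "Top n S (\<lambda>c. (1/2) * x c + (1/2) * Top n Z x c) = Top n S (Top n (half Z) x)"
    by (rule Top_resp) (simp add: Top_half_at)
  finally show "Top n (half Z) (Top n S x) a = Top n S (Top n (half Z) x) a" .
qed

lemma half_idem: assumes "involop n Z" shows "idemop n (half Z)"
  unfolding idemop_def
proof (intro allI impI)
  fix x a assume a: "a < n"
  have "Top n Z (Top n (half Z) x) = Top n Z (\<lambda>c. (1/2) * x c + (1/2) * Top n Z x c)"
    by (rule Top_resp) (simp add: Top_half_at)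
  also have "\<dots> = (\<lambda>c. (1/2) * Top n Z x c + (1/2) * Top n Z (Top n Z x) c)" by (rule Top_lin)
  finally have e: "Top n Z (Top n (half Z) x) a = (1/2) * Top n Z x a + (1/2) * x a"
    using assms a unfolding involop_def by simp
  have "Top n (half Z) (Top n (half Z) x) a = (1/2) * Top n (half Z) x a + (1/2) * Top n Z (Top n (half Z) x) a"
    using a by (rule Top_half_at)
  also have "\<dots> = Top n (half Z) x a" using e a by (simp add: Top_half_at field_simps)
  finally show "Top n (half Z) (Top n (half Z) x) a = Top n (half Z) x a" .
qed

lemma mm_idem:
  assumes "idemop n H1" "idemop n H2" "opcomm n H1 H2"
  shows "idemop n (mm n H1 H2)"
  unfolding idemop_def
proof (intro allI impI)
  fix x a assume a: "a < n"
  have e1: "Top n H1 (Top n H2 (Top n H1 (Top n H2 x))) = Top n H1 (Top n H1 (Top n H2 (Top n H2 x)))"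
    by (rule Top_resp) (use assms(3) in \<open>simp add: opcomm_def\<close>)
  have e2: "Top n H1 (Top n H2 (Top n H2 x)) = Top n H1 (Top n H2 x)"
    by (rule Top_resp) (use assms(2) in \<open>simp add: idemop_def\<close>)
  have "Top n H1 (Top n H1 (Top n H2 (Top n H2 x))) a = Top n H1 (Top n H2 (Top n H2 x)) a"
    using assms(1) a unfolding idemop_def by blast
  then show "Top n (mm n H1 H2) (Top n (mm n H1 H2) x) a = Top n (mm n H1 H2) x a"
    using e1 e2 by (simp add: Top_mm)
qed

lemma ip_delta_left: "a < n \<Longrightarrow> ip n (\<lambda>b. if b = a then 1 else 0) z = z a"
proof -
  assume a: "a < n"
  have "ip n (\<lambda>b. if b = a then 1 else 0) z = (\<Sum>k<n. if k = a then z k else 0)"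
    unfolding ip_def by (rule sum.cong) auto
  then show ?thesis using a by simp
qed

lemma Top_delta: "Top n p (\<lambda>c. if c = b then 1 else 0) a = (if b < n then p a b else 0)"
proof -
  have "Top n p (\<lambda>c. if c = b then 1 else 0) a = (\<Sum>c<n. if c = b then p a c else 0)"
    unfolding Top_def by (rule sum.cong) auto
  then show ?thesis by simp
qed

lemma no_hadamard_ops:
  fixes n :: nat and s :: "nat \<Rightarrow> nat \<Rightarrow> nat \<Rightarrow> real" and u :: "nat \<Rightarrow> real"
  assumes n3: "3 \<le> n" and sy: "\<forall>i<n. symm n (s i)" and inv: "\<forall>i<n. invol n (s i)"
    and com: "\<forall>i<n. \<forall>j<n. commut n (s i) (s j)" and uu: "ip n u u = 1"
    and vu: "\<forall>i<n. \<forall>b<n. (if b = i then 1 else 0) = Top n (s i) u b"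
  shows "4 dvd n"
proof -
  define d where "d = (\<lambda>(i::nat) (b::nat). if b = i then (1::real) else 0)"
  have Tu: "\<And>i b. i < n \<Longrightarrow> b < n \<Longrightarrow> Top n (s i) u b = d i b" using vu unfolding d_def by auto
  have ipd: "ip n (Top n (s i) u) (Top n (s j) u) = (if i = j then 1 else 0)" if "i < n" "j < n" for i j
  proof -
    have "ip n (Top n (s i) u) (Top n (s j) u) = ip n (d i) (d j)"
      by (rule ip_cong) (simp_all add: Tu that)
    also have "\<dots> = d j i" unfolding d_def by (rule ip_delta_left[OF that(1)])
    finally show ?thesis unfolding d_def by simp
  qed
  have sa: "\<And>i. i < n \<Longrightarrow> selfadj n (s i)" using sy symm_selfadj by blast
  have io: "\<And>i. i < n \<Longrightarrow> involop n (s i)" using inv invol_involop by blast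
  have oc: "\<And>i j. i < n \<Longrightarrow> j < n \<Longrightarrow> opcomm n (s i) (s j)" using com commut_opcomm by blast
  have n0: "0 < n" and n1: "1 < n" and n2: "2 < n" using n3 by auto
  define Z1 where "Z1 = mm n (s 0) (s 1)"
  define Z2 where "Z2 = mm n (s 0) (s 2)"
  have Z1sa: "selfadj n Z1" unfolding Z1_def by (rule mm_selfadj[OF sa sa oc]) (use n0 n1 in auto)
  have Z2sa: "selfadj n Z2" unfolding Z2_def by (rule mm_selfadj[OF sa sa oc]) (use n0 n2 in auto)
  have Z1io: "involop n Z1" unfolding Z1_def by (rule mm_involop[OF io io oc]) (use n0 n1 in auto)
  have Z2io: "involop n Z2" unfolding Z2_def by (rule mm_involop[OF io io oc]) (use n0 n2 in auto)
  have Z1c: "opcomm n Z1 (s a)" if "a < n" for a unfolding Z1_def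
    by (rule mm_opcomm[OF oc oc]) (use n0 n1 that in auto)
  have Z2c: "opcomm n Z2 (s a)" if "a < n" for a unfolding Z2_def
    by (rule mm_opcomm[OF oc oc]) (use n0 n2 that in auto)
  have Z12: "opcomm n Z1 Z2" unfolding Z1_def
    by (rule mm_opcomm[OF opcomm_sym[OF Z2c] opcomm_sym[OF Z2c]]) (use n0 n1 in auto)
  define H1 where "H1 = half Z1"
  define H2 where "H2 = half Z2"
  have H1sa: "selfadj n H1" unfolding H1_def by (rule half_selfadj[OF Z1sa])
  have H2sa: "selfadj n H2" unfolding H2_def by (rule half_selfadj[OF Z2sa])
  have H1i: "idemop n H1" unfolding H1_def by (rule half_idem[OF Z1io])
  have H2i: "idemop n H2" unfolding H2_def by (rule half_idem[OF Z2io])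
  have H1c: "opcomm n H1 (s a)" if "a < n" for a unfolding H1_def by (rule half_opcomm[OF Z1c[OF that]])
  have H2c: "opcomm n H2 (s a)" if "a < n" for a unfolding H2_def by (rule half_opcomm[OF Z2c[OF that]])
  have H12: "opcomm n H1 H2"
  proof -
    have "opcomm n H2 Z1" unfolding H2_def by (rule half_opcomm[OF opcomm_sym[OF Z12]])
    then have "opcomm n H1 H2" unfolding H1_def by (rule half_opcomm[OF opcomm_sym])
    then show ?thesis .
  qed
  define p where "p = mm n H1 H2"
  have psa: "selfadj n p" unfolding p_def by (rule mm_selfadj[OF H1sa H2sa H12])
  have pid: "idemop n p" unfolding p_def by (rule mm_idem[OF H1i H2i H12])
  have pc: "opcomm n p (s a)" if "a < n" for a unfolding p_def by (rule mm_opcomm[OF H1c[OF that] H2c[OF that]])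
  have pent: "p a b = Top n p (d b) a" if "b < n" for a b unfolding d_def using Top_delta[of n p b a] that by simp
  have psym: "\<forall>a<n. \<forall>b<n. p a b = p b a"
  proof (intro allI impI)
    fix a b assume a: "a < n" and b: "b < n"
    have "p a b = ip n (d a) (Top n p (d b))" using pent[OF b] ip_delta_left[OF a] unfolding d_def by simp
    also have "\<dots> = ip n (Top n p (d a)) (d b)" using psa unfolding selfadj_def by simp
    also have "\<dots> = Top n p (d a) b"
      using ip_delta_left[OF b, of "Top n p (d a)"] ip_sym[of n "Top n p (d a)" "d b"] unfolding d_def by simp
    also have "\<dots> = p b a" using pent[OF a] by simp
    finally show "p a b = p b a" .
  qed
  have pidem: "\<forall>a<n. \<forall>b<n. (\<Sum>c<n. p a c * p c b) = p a b"
  proof (intro allI impI)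
    fix a b assume a: "a < n" and b: "b < n"
    have "(\<Sum>c<n. p a c * p c b) = Top n p (\<lambda>c. p c b) a" unfolding Top_def ..
    also have "Top n p (\<lambda>c. p c b) = Top n p (Top n p (d b))"
      by (rule Top_resp) (use pent b in simp)
    also have "\<dots> a = Top n p (d b) a" using pid a unfolding idemop_def by blast
    also have "\<dots> = p a b" using pent[OF b] by simp
    finally show "(\<Sum>c<n. p a c * p c b) = p a b" .
  qed
  obtain m :: nat where m: "(\<Sum>a<n. p a a) = real m" using trace_nat[OF psym pidem] by blast
  have Hat: "\<And>H Z x c. H = half Z \<Longrightarrow> c < n \<Longrightarrow> Top n H x c = (1/2) * x c + (1/2) * Top n Z x c"
    using Top_half_at by blast
  have q: "ip n u (Top n p u) = 1/4"
  proof -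
    have "ip n u (Top n p u) = ip n u (Top n H1 (Top n H2 u))" unfolding p_def Top_mm ..
    also have "\<dots> = ip n (Top n H1 u) (Top n H2 u)" using H1sa[unfolded selfadj_def, rule_format, of u "Top n H2 u"] by simp
    also have "\<dots> = ip n (\<lambda>c. (1/2) * u c + (1/2) * Top n Z1 u c) (\<lambda>c. (1/2) * u c + (1/2) * Top n Z2 u c)"
      by (rule ip_cong) (simp_all add: Hat H1_def H2_def)
    also have "\<dots> = (1/4) * (ip n u u + ip n u (Top n Z2 u) + ip n (Top n Z1 u) u + ip n (Top n Z1 u) (Top n Z2 u))"
      by (simp only: ip_lin ip_lin2) (simp add: algebra_simps)
    also have "ip n u (Top n Z2 u) = 0"
    proof -
      have "ip n u (Top n Z2 u) = ip n u (Top n (s 0) (Top n (s 2) u))" unfolding Z2_def Top_mm ..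
      also have "\<dots> = ip n (Top n (s 0) u) (Top n (s 2) u)" using sa[OF n0, unfolded selfadj_def, rule_format, of u "Top n (s 2) u"] by simp
      also have "\<dots> = 0" using ipd n0 n2 by simp
      finally show ?thesis .
    qed
    also have "ip n (Top n Z1 u) u = 0"
    proof -
      have "ip n (Top n Z1 u) u = ip n (Top n (s 0) (Top n (s 1) u)) u" unfolding Z1_def Top_mm ..
      also have "\<dots> = ip n (Top n (s 1) u) (Top n (s 0) u)" using sa[OF n0] unfolding selfadj_def by simp
      also have "\<dots> = 0" using ipd n0 n1 by simp
      finally show ?thesis .
    qed
    also have "ip n (Top n Z1 u) (Top n Z2 u) = 0"
    proof -
      have "ip n (Top n Z1 u) (Top n Z2 u) = ip n (Top n (s 0) (Top n (s 1) u)) (Top n (s 0) (Top n (s 2) u))"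
        unfolding Z1_def Z2_def Top_mm ..
      also have "\<dots> = ip n (Top n (s 1) u) (Top n (s 0) (Top n (s 0) (Top n (s 2) u)))"
        using sa[OF n0] unfolding selfadj_def by simp
      also have "\<dots> = ip n (Top n (s 1) u) (Top n (s 2) u)"
        by (rule ip_cong) (use io[OF n0] in \<open>simp_all add: involop_def\<close>)
      also have "\<dots> = 0" using ipd n1 n2 by simp
      finally show ?thesis .
    qed
    finally show ?thesis using uu by simp
  qed
  have diag: "p a a = 1/4" if a: "a < n" for a
  proof -
    have "p a a = ip n (d a) (Top n p (d a))" using pent[OF a] ip_delta_left[OF a] unfolding d_def by simp
    also have "\<dots> = ip n (Top n (s a) u) (Top n p (Top n (s a) u))"
    proof -
      have e: "Top n p (d a) = Top n p (Top n (s a) u)" by (rule Top_resp) (simp add: Tu a)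
      show ?thesis unfolding e by (rule ip_cong) (simp_all add: Tu a)
    qed
    also have "\<dots> = ip n u (Top n (s a) (Top n p (Top n (s a) u)))"
      using sa[OF a] unfolding selfadj_def by simp
    also have "\<dots> = ip n u (Top n p (Top n (s a) (Top n (s a) u)))"
      by (rule ip_cong) (use pc[OF a] in \<open>simp_all add: opcomm_def\<close>)
    also have "Top n p (Top n (s a) (Top n (s a) u)) = Top n p u"
      by (rule Top_resp) (use io[OF a] in \<open>simp add: involop_def\<close>)
    finally show ?thesis using q by simp
  qed
  have "(\<Sum>a<n. p a a) = (\<Sum>a<n. 1/4)" by (rule sum.cong) (simp_all add: diag)
  then have "(\<Sum>a<n. p a a) = real n / 4" by simp
  then have "real n = 4 * real m" using m by simp
  then have "n = 4 * m" by linarith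
  then show ?thesis by simp
qed

lemma sign_sums:
  "(\<Sum>x\<in>sign_vecs n. (1::real)) = 2^n \<and>
   (\<forall>i<n. \<forall>j<n. (\<Sum>x\<in>sign_vecs n. x $ i * x $ j) = (if i = j then 2^n else 0))"
proof (induction n)
  case 0
  show ?case by (simp add: sign_vecs_0)
next
  case (Suc n)
  have c: "(\<Sum>x\<in>sign_vecs (Suc n). (1::real)) = 2^Suc n"
    using Suc.IH by (simp only: sum_sign_vecs_Suc) simp
  have p: "(\<Sum>x\<in>sign_vecs (Suc n). x $ i * x $ j) = (if i = j then 2^Suc n else 0)"
    if i: "i < Suc n" and j: "j < Suc n" for i j
  proof -
    have "(\<Sum>x\<in>sign_vecs (Suc n). x $ i * x $ j) =
        (\<Sum>x\<in>sign_vecs n. extv n x 1 $ i * extv n x 1 $ j + extv n x (-1) $ i * extv n x (-1) $ j)"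
      by (rule sum_sign_vecs_Suc)
    also have "\<dots> = (if i = j then 2^Suc n else 0)"
    proof (cases "i < n")
      case True
      note ti = True
      show ?thesis
      proof (cases "j < n")
        case True
        have "(\<Sum>x\<in>sign_vecs n. extv n x 1 $ i * extv n x 1 $ j + extv n x (-1) $ i * extv n x (-1) $ j)
            = 2 * (\<Sum>x\<in>sign_vecs n. x $ i * x $ j)"
          using ti True by (simp add: extv_index sum_distrib_left)
        then show ?thesis using Suc.IH ti True by simp
      next
        case False
        then have "j = n" using j by simp
        have "(\<Sum>x\<in>sign_vecs n. extv n x 1 $ i * extv n x 1 $ j + extv n x (-1) $ i * extv n x (-1) $ j) = 0"
          using ti \<open>j = n\<close> by (simp add: extv_index)
        then show ?thesis using ti \<open>j = n\<close> by simp
      qed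
    next
      case False
      then have "i = n" using i by simp
      show ?thesis
      proof (cases "j < n")
        case True
        have "(\<Sum>x\<in>sign_vecs n. extv n x 1 $ i * extv n x 1 $ j + extv n x (-1) $ i * extv n x (-1) $ j) = 0"
          using True \<open>i = n\<close> by (simp add: extv_index)
        then show ?thesis using True \<open>i = n\<close> by simp
      next
        case False
        then have "j = n" using j by simp
        have "(\<Sum>x\<in>sign_vecs n. extv n x 1 $ i * extv n x 1 $ j + extv n x (-1) $ i * extv n x (-1) $ j)
            = 2 * (\<Sum>x\<in>sign_vecs n. (1::real))"
          using \<open>i = n\<close> \<open>j = n\<close> by (simp add: extv_index sum_distrib_left)
        then show ?thesis using Suc.IH \<open>i = n\<close> \<open>j = n\<close> by simp
      qed
    qed
    finally show ?thesis .
  qed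
  show ?case using c p by blast
qed

lemma identity_cut: "1\<^sub>m N \<in> cut_polytope N"
  unfolding cut_polytope_def
proof (intro CollectI conjI exI[of _ "\<lambda>_. 1 / 2^N"] ballI allI impI)
  show "1\<^sub>m N \<in> carrier_mat N N" by simp
  show "0 \<le> 1 / (2::real) ^ N" by simp
  show "(\<Sum>x\<in>sign_vecs N. 1 / (2::real) ^ N) = 1"
    using sign_sums[of N] by simp
  fix i j assume i: "i < N" and j: "j < N"
  have "(\<Sum>x\<in>sign_vecs N. 1 / 2 ^ N * (x $ i * x $ j)) = 1 / 2 ^ N * (\<Sum>x\<in>sign_vecs N. x $ i * x $ j)"
    by (simp add: sum_distrib_left)
  also have "\<dots> = 1\<^sub>m N $$ (i, j)" using sign_sums[of N] i j by simp
  finally show "1\<^sub>m N $$ (i, j) = (\<Sum>x\<in>sign_vecs N. 1 / 2 ^ N * (x $ i * x $ j))" by simp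
qed

lemma gram_unit: "1\<^sub>m N = gram_mat N (\<lambda>i. unit_vec N i)"
  unfolding gram_mat_def by (rule eq_matI) auto

lemma part_a:
  fixes N r :: nat and v :: "nat \<Rightarrow> real vec"
  assumes vc: "\<forall>i<N. v i \<in> carrier_vec r" and sumv: "(\<Sum>i<N. v i \<bullet> v i) = real N"
    and ex: "\<exists>M \<in> B_set N r. mat_rank M = r \<and> concat_vecs r N v \<bullet> (M *\<^sub>v concat_vecs r N v) = real N ^ 2"
  shows "gram_mat N v \<in> cut_polytope N"
proof (cases "N = 0")
  case True
  show ?thesis unfolding cut_polytope_def True
    by (intro CollectI conjI exI[of _ "\<lambda>_. 1"]) (auto simp: gram_mat_def sign_vecs_0)
next
  case False
  then have N: "0 < N" by simp
  obtain M where MB: "M \<in> B_set N r" and rk: "mat_rank M = r"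
    and Q: "concat_vecs r N v \<bullet> (M *\<^sub>v concat_vecs r N v) = real N ^ 2" using ex by blast
  obtain s u where sy: "\<forall>i<N. symm r (s i)" and inv: "\<forall>i<N. invol r (s i)"
    and com: "\<forall>i<N. \<forall>j<N. commut r (s i) (s j)" and uu: "ip r u u = 1"
    and vu: "\<forall>i<N. \<forall>b<r. v i $ b = Top r (s i) u b"
    using derive_u[OF N vc sumv MB rk Q] by blast
  obtain w where w: "cutrep N r s u w" using cut_core[OF sy inv com] by blast
  show ?thesis unfolding cut_polytope_def
  proof (intro CollectI conjI exI[of _ w] ballI allI impI)
    show "gram_mat N v \<in> carrier_mat N N" unfolding gram_mat_def by simp
    show "0 \<le> w x" if "x \<in> sign_vecs N" for x using w that unfolding cutrep_def by blast
    show "(\<Sum>x\<in>sign_vecs N. w x) = 1" using w uu unfolding cutrep_def by simp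
    fix i j assume i: "i < N" and j: "j < N"
    have "gram_mat N v $$ (i,j) = v i \<bullet> v j" unfolding gram_mat_def using i j by simp
    also have "\<dots> = ip r (\<lambda>b. v i $ b) (\<lambda>b. v j $ b)"
    proof -
      have "dim_vec (v j) = r" using vc j by auto
      then show ?thesis unfolding ip_def scalar_prod_def by (simp add: lessThan_atLeast0)
    qed
    also have "\<dots> = ip r (Top r (s i) u) (Top r (s j) u)"
      by (rule ip_cong) (use vu i j in auto)
    also have "\<dots> = (\<Sum>x\<in>sign_vecs N. w x * (x $ i * x $ j))" using w i j unfolding cutrep_def by simp
    finally show "gram_mat N v $$ (i,j) = (\<Sum>x\<in>sign_vecs N. w x * (x $ i * x $ j))" .
  qed
qed

lemma part_b:
  fixes N :: nat
  assumes N: "N \<notin> {1, 2}" "\<not> 4 dvd N"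
  shows "\<not> (\<exists>M \<in> B_set N N.
                 concat_vecs N N (\<lambda>i. unit_vec N i) \<bullet> (M *\<^sub>v concat_vecs N N (\<lambda>i. unit_vec N i)) = real N ^ 2
                 \<and> mat_rank M = N)"
proof
  assume "\<exists>M \<in> B_set N N.
                 concat_vecs N N (\<lambda>i. unit_vec N i) \<bullet> (M *\<^sub>v concat_vecs N N (\<lambda>i. unit_vec N i)) = real N ^ 2
                 \<and> mat_rank M = N"
  then obtain M where MB: "M \<in> B_set N N" and rk: "mat_rank M = N"
    and Q: "concat_vecs N N (\<lambda>i. unit_vec N i) \<bullet> (M *\<^sub>v concat_vecs N N (\<lambda>i. unit_vec N i)) = real N ^ 2"
    by blast
  have "N \<noteq> 0" using N(2) by (intro notI) simp
  then have N3: "3 \<le> N" using N(1) by auto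
  then have N0: "0 < N" by simp
  have vc: "\<forall>i<N. unit_vec N i \<in> carrier_vec N" by simp
  have sumv: "(\<Sum>i<N. unit_vec N i \<bullet> unit_vec N i) = real N" by simp
  obtain s u where sy: "\<forall>i<N. symm N (s i)" and inv: "\<forall>i<N. invol N (s i)"
    and com: "\<forall>i<N. \<forall>j<N. commut N (s i) (s j)" and uu: "ip N u u = 1"
    and vu: "\<forall>i<N. \<forall>b<N. unit_vec N i $ b = Top N (s i) u b"
    using derive_u[OF N0 vc sumv MB rk Q] by blast
  have vu': "\<forall>i<N. \<forall>b<N. (if b = i then 1 else 0) = Top N (s i) u b" using vu by auto
  have "4 dvd N" by (rule no_hadamard_ops[OF N3 sy inv com uu vu'])
  then show False using N by simp
qed

theorem proposition9:
  shows "(\<forall>(N::nat) (r::nat) (v :: nat \<Rightarrow> real vec).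
            (\<forall>i<N. v i \<in> carrier_vec r) \<longrightarrow>
            (\<Sum>i<N. v i \<bullet> v i) = real N \<longrightarrow>
            (\<exists>M \<in> B_set N r. mat_rank M = r \<and>
               concat_vecs r N v \<bullet> (M *\<^sub>v concat_vecs r N v) = real N ^ 2) \<longrightarrow>
            gram_mat N v \<in> cut_polytope N)
       \<and> (\<forall>N::nat. N \<notin> {1, 2} \<and> \<not> (4 dvd N) \<longrightarrow>
            1\<^sub>m N \<in> cut_polytope N \<and>
            1\<^sub>m N = gram_mat N (\<lambda>i. unit_vec N i) \<and>
            \<not> (\<exists>M \<in> B_set N N.
                 concat_vecs N N (\<lambda>i. unit_vec N i) \<bullet> (M *\<^sub>v concat_vecs N N (\<lambda>i. unit_vec N i)) = real N ^ 2
                 \<and> mat_rank M = N))"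
  using part_a part_b identity_cut gram_unit by blast

end
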